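(* Let $\psi(u,v)$ be a smooth function on $\mathbb R^2$ which, together with all its derivatives, has at most polynomial growth, and set $g(x)=\psi(|x|^2,|x|_{-1}^2)$, $x\in\mathbb R^N$. Then for every $\varepsilon>0$, $\widetilde Lg$ is $\widetilde\mu_\varepsilon$-integrable and $\int\widetilde Lg\,d\widetilde\mu_\varepsilon=0$.
   Context: Let $n\ge4$, $N=2n$, $1=\lambda_1=\lambda_2<\lambda_3=\lambda_4<\dots<\lambda_{N-1}=\lambda_N$. On $\mathbb R^N$: $\langle x,y\rangle=\sum x_\ell y_\ell$, $|x|^2=\sum x_\ell^2$, $\langle x,y\rangle_{-1}=\sum x_\ell y_\ell/\lambda_\ell$, $|x|_{-1}^2=\sum x_\ell^2/\lambda_\ell$. Fix $a>0$, $\delta_\ell\in(-1,0]$ with $\delta_{2i}=\delta_{2i-1}$, and $\widetilde L=\sum_\ell\lambda_\ell(\tfrac a2(1+\delta_\ell)\partial_\ell^2-x_\ell\partial_\ell)$. Let $b$ be a vector field with each $b(x)_\ell$ a quadratic form in $x$, $\operatorname{div}b=0$, $\langle x,b(x)\rangle=0=\langle x,b(x)\rangle_{-1}$; $B=\sum b(x)_\ell\partial_\ell$. With $\mathcal J$ the triples $J=(k,\ell,m)$ with $\lambda_k<\lambda_\ell<\lambda_m$, $T_J=\sum x_ax_b(1/\lambda_a-1/\lambda_b)\partial_c$ (sum over cyclic permutations $(a,b,c)$ of $J$), $R_i=x_{2i}\partial_{2i-1}-x_{2i-1}\partial_{2i}$; enumerate these as $Z_1,\dots,Z_M$, $\mathcal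 D=\frac12\sum Z_m^2$. Fix $\kappa\in(0,1]$, and $\widetilde{\mathcal L}^\varepsilon=\widetilde L+\varepsilon^{-1}(B+\kappa\mathcal D)$. It is known that for each $x$ the martingale problem for $\widetilde{\mathcal L}^\varepsilon$ on $C(\mathbb R_+,\mathbb R^N)$ started at $x$ (with test functions smooth compactly supported) is well posed, that the solutions form a strong Markov process, and that it has a unique stationary probability $\widetilde\mu_\varepsilon$, which satisfies $\int\exp\{|x|_{-1}^2/(2a)\}d\widetilde\mu_\varepsilon<\infty$. *)

theory Defs
  imports "HOL-Probability.Probability"
begin

definition pd :: "'N::finite \<Rightarrow> (real^'N \<Rightarrow> real) \<Rightarrow> real^'N \<Rightarrow> real" where
  "pd k f x = deriv (\<lambda>t. f (x + t *\<^sub>R axis k 1)) 0"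

fun pds :: "'N::finite list \<Rightarrow> (real^'N \<Rightarrow> real) \<Rightarrow> real^'N \<Rightarrow> real" where
  "pds [] f = f"
| "pds (k # ks) f = pd k (pds ks f)"

definition smooth :: "(real^'N::finite \<Rightarrow> real) \<Rightarrow> bool" where
  "smooth f \<longleftrightarrow> (\<forall>ks. continuous_on UNIV (pds ks f) \<and>
      (\<forall>k x. ((\<lambda>t. pds ks f (x + t *\<^sub>R axis k 1)) has_real_derivative pds (k # ks) f x) (at 0)))"

definition test_fun :: "(real^'N::finite \<Rightarrow> real) \<Rightarrow> bool" where
  "test_fun f \<longleftrightarrow> smooth f \<and> (\<exists>r. \<forall>x. r < norm x \<longrightarrow> f x = 0)"

definition poly_growth_smooth :: "(real^'M::finite \<Rightarrow> real) \<Rightarrow> bool" where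
  "poly_growth_smooth \<psi> \<longleftrightarrow> smooth \<psi> \<and>
     (\<forall>ks. \<exists>C (m::nat). \<forall>y. \<bar>pds ks \<psi> y\<bar> \<le> C * (1 + norm y) ^ m)"

definition wnorm2 :: "('N::finite \<Rightarrow> real) \<Rightarrow> real^'N \<Rightarrow> real" where
  "wnorm2 lam x = (\<Sum>l\<in>UNIV. (x $ l)^2 / lam l)"

definition winner :: "('N::finite \<Rightarrow> real) \<Rightarrow> real^'N \<Rightarrow> real^'N \<Rightarrow> real" where
  "winner lam x y = (\<Sum>l\<in>UNIV. x $ l * y $ l / lam l)"

definition Ltil :: "('N::finite \<Rightarrow> real) \<Rightarrow> real \<Rightarrow> ('N \<Rightarrow> real)
     \<Rightarrow> (real^'N \<Rightarrow> real) \<Rightarrow> real^'N \<Rightarrow> real" where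
  "Ltil lam a del f x = (\<Sum>l\<in>UNIV. lam l * (a/2 * (1 + del l) * pd l (pd l f) x - x $ l * pd l f x))"

definition Bop :: "(real^'N::finite \<Rightarrow> real^'N) \<Rightarrow> (real^'N \<Rightarrow> real) \<Rightarrow> real^'N \<Rightarrow> real" where
  "Bop b f x = (\<Sum>l\<in>UNIV. b x $ l * pd l f x)"

definition divergence :: "(real^'N::finite \<Rightarrow> real^'N) \<Rightarrow> real^'N \<Rightarrow> real" where
  "divergence b x = (\<Sum>l\<in>UNIV. pd l (\<lambda>y. b y $ l) x)"

definition triples :: "('N::finite \<Rightarrow> real) \<Rightarrow> ('N \<times> 'N \<times> 'N) set" where
  "triples lam = {(k,l,m). lam k < lam l \<and> lam l < lam m}"

definition TJ :: "('N::finite \<Rightarrow> real) \<Rightarrow> 'N \<times> 'N \<times> 'N \<Rightarrow> (real^'N \<Rightarrow> real) \<Rightarrow> real^'N \<Rightarrow> real" where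
  "TJ lam J f x = (case J of (k,l,m) \<Rightarrow>
       x$k * x$l * (1/lam k - 1/lam l) * pd m f x
     + x$l * x$m * (1/lam l - 1/lam m) * pd k f x
     + x$m * x$k * (1/lam m - 1/lam k) * pd l f x)"

text \<open>Coordinates of R^N, N = 2n, are indexed by \<open>'i \<times> bool\<close>: \<open>(i,False)\<close> is coordinate 2i-1
  and \<open>(i,True)\<close> is coordinate 2i.  \<open>R_i = x_{2i} d_{2i-1} - x_{2i-1} d_{2i}\<close>.\<close>
definition Rop :: "'i \<Rightarrow> (real^('i::finite \<times> bool) \<Rightarrow> real) \<Rightarrow> real^('i \<times> bool) \<Rightarrow> real" where
  "Rop i f x = x $ (i,True) * pd (i,False) f x - x $ (i,False) * pd (i,True) f x"

definition Dop :: "(('i::finite \<times> bool) \<Rightarrow> real) \<Rightarrow> (real^('i \<times> bool) \<Rightarrow> real) \<Rightarrow> real^('i \<times> bool) \<Rightarrow> real" where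
  "Dop lam f x = 1/2 * ((\<Sum>J\<in>triples lam. TJ lam J (TJ lam J f) x) + (\<Sum>i\<in>UNIV. Rop i (Rop i f) x))"

definition Leps :: "(('i::finite \<times> bool) \<Rightarrow> real) \<Rightarrow> real \<Rightarrow> (('i \<times> bool) \<Rightarrow> real)
   \<Rightarrow> (real^('i \<times> bool) \<Rightarrow> real^('i \<times> bool)) \<Rightarrow> real \<Rightarrow> real
   \<Rightarrow> (real^('i \<times> bool) \<Rightarrow> real) \<Rightarrow> real^('i \<times> bool) \<Rightarrow> real" where
  "Leps lam a del b \<kappa> \<epsilon> f x = Ltil lam a del f x + (1/\<epsilon>) * (Bop b f x + \<kappa> * Dop lam f x)"

text \<open>Continuous paths on \<open>[0,\<infinity>)\<close>, canonically extended as constant to negative times.\<close>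
definition cpaths :: "(real \<Rightarrow> 'a::topological_space) set" where
  "cpaths = {\<omega>. continuous_on {0..} \<omega> \<and> (\<forall>t<0. \<omega> t = \<omega> 0)}"

definition path_space :: "(real \<Rightarrow> 'a::topological_space) measure" where
  "path_space = sigma cpaths {(\<lambda>\<omega>. \<omega> t) -` A \<inter> cpaths | t A. 0 \<le> t \<and> A \<in> sets borel}"

definition nat_filt :: "real \<Rightarrow> (real \<Rightarrow> 'a::topological_space) measure" where
  "nat_filt s = sigma cpaths {(\<lambda>\<omega>. \<omega> t) -` A \<inter> cpaths | t A. 0 \<le> t \<and> t \<le> s \<and> A \<in> sets borel}"

definition martingale :: "'w measure \<Rightarrow> (real \<Rightarrow> 'w measure) \<Rightarrow> (real \<Rightarrow> 'w \<Rightarrow> real) \<Rightarrow> bool" where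
  "martingale M F X \<longleftrightarrow>
     (\<forall>t\<ge>0. sigma_finite_subalgebra M (F t) \<and> integrable M (X t) \<and> X t \<in> borel_measurable (F t)) \<and>
     (\<forall>s t. 0 \<le> s \<longrightarrow> s \<le> t \<longrightarrow> (AE \<omega> in M. real_cond_exp M (F s) (X t) \<omega> = X s \<omega>))"

definition solves_MP :: "((real^'N::finite \<Rightarrow> real) \<Rightarrow> real^'N \<Rightarrow> real) \<Rightarrow> real^'N
     \<Rightarrow> (real \<Rightarrow> real^'N) measure \<Rightarrow> bool" where
  "solves_MP L x P \<longleftrightarrow> prob_space P \<and> sets P = sets path_space \<and> (AE \<omega> in P. \<omega> 0 = x) \<and>
     (\<forall>f. test_fun f \<longrightarrow>
        martingale P nat_filt (\<lambda>t \<omega>. f (\<omega> t) - f (\<omega> 0) - integral {0..t} (\<lambda>r. L f (\<omega> r))))"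

definition well_posed_MP :: "((real^'N::finite \<Rightarrow> real) \<Rightarrow> real^'N \<Rightarrow> real) \<Rightarrow> bool" where
  "well_posed_MP L \<longleftrightarrow> (\<forall>x. \<exists>!P. solves_MP L x P)"

definition stationary_prob :: "((real^'N::finite \<Rightarrow> real) \<Rightarrow> real^'N \<Rightarrow> real) \<Rightarrow> (real^'N) measure \<Rightarrow> bool" where
  "stationary_prob L \<mu> \<longleftrightarrow> prob_space \<mu> \<and> sets \<mu> = sets borel \<and>
     (\<exists>P. (\<forall>x. solves_MP L x (P x)) \<and>
        (\<forall>t\<ge>0. \<forall>A\<in>sets borel.
           (\<lambda>x. emeasure (P x) {\<omega>\<in>space (P x). \<omega> t \<in> A}) \<in> borel_measurable borel \<and>
           (\<integral>\<^sup>+x. emeasure (P x) {\<omega>\<in>space (P x). \<omega> t \<in> A} \<partial>\<mu>) = emeasure \<mu> A))"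

end

theory Submission
  imports Defs "HOL-Computational_Algebra.Polynomial"
begin

lemma pds_append: "pds (ks @ ms) f = pds ks (pds ms f)"
  by (induction ks) auto

lemma smooth_by_closed:
  assumes cl: "\<And>g. g \<in> A \<Longrightarrow> continuous_on UNIV g \<and>
      (\<forall>k x. ((\<lambda>t. g (x + t *\<^sub>R axis k 1)) has_real_derivative pd k g x) (at 0)) \<and> (\<forall>k. pd k g \<in> A)"
    and f: "f \<in> A"
  shows "smooth f"
proof -
  have "pds ks f \<in> A" for ks
    by (induction ks) (use f cl in auto)
  then show ?thesis unfolding smooth_def using cl by auto
qed

inductive_set alg :: "(real^'N::finite \<Rightarrow> real) set \<Rightarrow> (real^'N \<Rightarrow> real) set" for B where
  base: "b \<in> B \<Longrightarrow> b \<in> alg B"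
| const: "(\<lambda>x. c) \<in> alg B"
| add: "f \<in> alg B \<Longrightarrow> g \<in> alg B \<Longrightarrow> (\<lambda>x. f x + g x) \<in> alg B"
| mult: "f \<in> alg B \<Longrightarrow> g \<in> alg B \<Longrightarrow> (\<lambda>x. f x * g x) \<in> alg B"

lemma pd_eqI:
  assumes "((\<lambda>t. f (x + t *\<^sub>R axis k 1)) has_real_derivative D) (at 0)"
  shows "pd k f x = D"
  using assms unfolding pd_def by (rule DERIV_imp_deriv)

lemma alg_smooth_aux:
  fixes f :: "real^'N::finite \<Rightarrow> real"
  assumes B: "\<And>b. b \<in> B \<Longrightarrow> continuous_on UNIV b \<and>
      (\<forall>k x. ((\<lambda>t. b (x + t *\<^sub>R axis k 1)) has_real_derivative pd k b x) (at 0)) \<and> (\<forall>k. pd k b \<in> alg B)"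
    and f: "f \<in> alg B"
  shows "continuous_on UNIV f \<and>
      (\<forall>k x. ((\<lambda>t. f (x + t *\<^sub>R axis k 1)) has_real_derivative pd k f x) (at 0)) \<and> (\<forall>k. pd k f \<in> alg B)"
  using f
proof induction
  case (base b)
  then show ?case using B by blast
next
  case (const c)
  have d: "((\<lambda>t. (\<lambda>x. c) (x + t *\<^sub>R axis k 1)) has_real_derivative 0) (at 0)" for k x
    by simp
  have e: "pd k (\<lambda>x::real^'N. c) = (\<lambda>x. 0)" for k
    using pd_eqI[OF d] by auto
  have "(\<lambda>x::real^'N. 0::real) \<in> alg B" by (rule alg.const)
  then show ?case using d e by (simp add: continuous_on_const)
next
  case (add f g)
  have d: "((\<lambda>t. (\<lambda>x. f x + g x) (x + t *\<^sub>R axis k 1)) has_real_derivative pd k f x + pd k g x) (at 0)" for k x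
    using add by (auto intro!: derivative_eq_intros)
  have e: "pd k (\<lambda>x. f x + g x) = (\<lambda>x. pd k f x + pd k g x)" for k
    using pd_eqI[OF d] by auto
  show ?case
    using add d e by (auto intro!: continuous_intros alg.add)
next
  case (mult f g)
  have d: "((\<lambda>t. (\<lambda>x. f x * g x) (x + t *\<^sub>R axis k 1)) has_real_derivative pd k f x * g x + f x * pd k g x) (at 0)" for k x
  proof -
    have d1: "((\<lambda>t. f (x + t *\<^sub>R axis k 1)) has_real_derivative pd k f x) (at 0)"
      and d2: "((\<lambda>t. g (x + t *\<^sub>R axis k 1)) has_real_derivative pd k g x) (at 0)"
      using mult by auto
    show ?thesis using DERIV_mult[OF d1 d2] by (simp add: mult.commute)
  qed
  have e: "pd k (\<lambda>x. f x * g x) = (\<lambda>x. pd k f x * g x + f x * pd k g x)" for k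
    using pd_eqI[OF d] by auto
  show ?case
    using mult d e by (auto intro!: continuous_intros alg.add alg.mult)
qed

lemma alg_smooth:
  assumes B: "\<And>b. b \<in> B \<Longrightarrow> continuous_on UNIV b \<and>
      (\<forall>k x. ((\<lambda>t. b (x + t *\<^sub>R axis k 1)) has_real_derivative pd k b x) (at 0)) \<and> (\<forall>k. pd k b \<in> alg B)"
    and f: "f \<in> alg B"
  shows "smooth f"
  by (rule smooth_by_closed[where A="alg B"]) (use alg_smooth_aux[OF B] f in auto)

lemma smooth_pds: "smooth f \<Longrightarrow> smooth (pds ks f)"
  unfolding smooth_def by (metis pds_append append_Cons)

lemma smooth_D: "smooth f \<Longrightarrow> continuous_on UNIV f"
  "smooth f \<Longrightarrow> ((\<lambda>t. f (x + t *\<^sub>R axis k 1)) has_real_derivative pd k f x) (at 0)"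
  unfolding smooth_def by (metis pds.simps)+

lemma poly_exp_lim: "((\<lambda>s. poly p s * exp (- s)) \<longlongrightarrow> (0::real)) at_top"
proof -
  have "((\<lambda>s. \<Sum>i\<le>degree p. coeff p i * (s ^ i / exp s)) \<longlongrightarrow> (\<Sum>i\<le>degree p. coeff p i * 0)) at_top"
    by (intro tendsto_sum tendsto_mult tendsto_const tendsto_power_div_exp_0)
  moreover have "(\<Sum>i\<le>degree p. coeff p i * (s ^ i / exp s)) = poly p s * exp (- s)" for s
  proof -
    have "(\<Sum>i\<le>degree p. coeff p i * (s ^ i / exp s)) = (\<Sum>i\<le>degree p. coeff p i * s ^ i) / exp s"
      by (simp add: sum_divide_distrib)
    then show ?thesis by (simp add: poly_altdef exp_minus divide_inverse)
  qed
  ultimately show ?thesis by simp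
qed

fun Pp :: "nat \<Rightarrow> real poly" where
  "Pp 0 = 1"
| "Pp (Suc j) = [:0,0,1:] * (Pp j - pderiv (Pp j))"

definition hD :: "nat \<Rightarrow> real \<Rightarrow> real" where
  "hD j t = (if t > 0 then poly (Pp j) (inverse t) * exp (- inverse t) else 0)"

lemma hD_nonpos: "t \<le> 0 \<Longrightarrow> hD j t = 0"
  by (simp add: hD_def)

lemma hD_deriv_pos:
  assumes "t > 0"
  shows "(hD j has_real_derivative hD (Suc j) t) (at t)"
proof -
  let ?p = "Pp j"
  have d1: "((\<lambda>t. poly ?p (inverse t)) has_real_derivative poly (pderiv ?p) (inverse t) * - (inverse t ^ 2)) (at t)"
    using DERIV_chain2[OF poly_DERIV DERIV_inverse, of t ?p] assms by (simp add: power2_eq_square)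
  have d2: "((\<lambda>t. exp (- inverse t)) has_real_derivative exp (- inverse t) * (- (- (inverse t ^ 2)))) (at t)"
    using DERIV_chain2[OF DERIV_exp DERIV_minus[OF DERIV_inverse], of t] assms by (simp add: power2_eq_square)
  have d: "((\<lambda>t. poly ?p (inverse t) * exp (- inverse t)) has_real_derivative
      (poly (pderiv ?p) (inverse t) * - (inverse t ^ 2)) * exp (- inverse t) + poly ?p (inverse t) * (exp (- inverse t) * (- (- (inverse t ^ 2))))) (at t)"
    using DERIV_mult[OF d1 d2] by (simp add: algebra_simps)
  have "(poly (pderiv ?p) (inverse t) * - (inverse t ^ 2)) * exp (- inverse t) + poly ?p (inverse t) * (exp (- inverse t) * (- (- (inverse t ^ 2))))
      = hD (Suc j) t"
    using assms by (simp add: hD_def poly_diff power2_eq_square algebra_simps)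
  with d have "((\<lambda>t. poly ?p (inverse t) * exp (- inverse t)) has_real_derivative hD (Suc j) t) (at t)" by simp
  then show ?thesis
    by (rule has_field_derivative_transform_within_open[where S="{0<..}"]) (use assms in \<open>auto simp: hD_def\<close>)
qed

lemma hD_deriv_neg:
  assumes "t < 0"
  shows "(hD j has_real_derivative hD (Suc j) t) (at t)"
proof -
  have "((\<lambda>t. 0) has_real_derivative hD (Suc j) t) (at t)" using assms by (simp add: hD_def)
  then show ?thesis
    by (rule has_field_derivative_transform_within_open[where S="{..<0}"]) (use assms in \<open>auto simp: hD_def\<close>)
qed

lemma hD_deriv_0: "(hD j has_real_derivative hD (Suc j) 0) (at 0)"
proof -
  have "((\<lambda>y. (hD j y - hD j 0) / (y - 0)) \<longlongrightarrow> 0) (at 0)"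
  proof (rule filterlim_split_at)
    show "((\<lambda>y. (hD j y - hD j 0) / (y - 0)) \<longlongrightarrow> 0) (at_left 0)"
    proof (rule Lim_transform_eventually[OF tendsto_const])
      show "\<forall>\<^sub>F y in at_left 0. 0 = (hD j y - hD j 0) / (y - 0)"
        unfolding eventually_at_left_field
        by (rule exI[of _ "-1"]) (auto simp: hD_def)
    qed
  next
    have l: "((\<lambda>s. poly (pCons 0 (Pp j)) s * exp (- s)) \<longlongrightarrow> 0) at_top"
      by (rule poly_exp_lim)
    have "((\<lambda>y. poly (pCons 0 (Pp j)) (inverse y) * exp (- inverse y)) \<longlongrightarrow> 0) (at_right 0)"
      by (rule filterlim_compose[OF l filterlim_inverse_at_top_right])
    then show "((\<lambda>y. (hD j y - hD j 0) / (y - 0)) \<longlongrightarrow> 0) (at_right 0)"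
    proof (rule Lim_transform_eventually)
      show "\<forall>\<^sub>F y in at_right 0. poly (pCons 0 (Pp j)) (inverse y) * exp (- inverse y) = (hD j y - hD j 0) / (y - 0)"
        unfolding eventually_at_right_field
        by (rule exI[of _ 1]) (auto simp: hD_def field_simps)
    qed
  qed
  moreover have "hD (Suc j) 0 = 0" by (simp add: hD_def)
  ultimately show ?thesis by (simp add: has_field_derivative_iff)
qed

lemma hD_deriv: "(hD j has_real_derivative hD (Suc j) t) (at t)"
  using hD_deriv_pos hD_deriv_neg hD_deriv_0 by (cases "t > 0"; cases "t < 0") auto

lemma hD_cont: "continuous_on UNIV (hD j)"
  using hD_deriv DERIV_isCont continuous_at_imp_continuous_on by blast

lemma poly_exp_bounded: "\<exists>M. \<forall>s\<ge>0. \<bar>poly p s * exp (- s)\<bar> \<le> (M::real)"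
proof -
  from poly_exp_lim[of p] have "\<forall>\<^sub>F s in at_top. dist (poly p s * exp (- s)) 0 < 1"
    by (rule tendstoD) simp
  then obtain S where S: "\<And>s. s \<ge> S \<Longrightarrow> \<bar>poly p s * exp (- s)\<bar> < 1"
    unfolding eventually_at_top_linorder by auto
  have "compact ((\<lambda>s. poly p s * exp (- s)) ` {0..S})"
    by (intro compact_continuous_image continuous_intros) auto
  then obtain M where M: "\<And>y. y \<in> (\<lambda>s. poly p s * exp (- s)) ` {0..S} \<Longrightarrow> norm y \<le> M"
    using compact_imp_bounded bounded_iff by metis
  show ?thesis
  proof (intro exI allI impI)
    fix s :: real assume "s \<ge> 0"
    show "\<bar>poly p s * exp (- s)\<bar> \<le> max M 1"
    proof (cases "s \<le> S")
      case True then show ?thesis using M[of "poly p s * exp (- s)"] \<open>s \<ge> 0\<close> by force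
    next
      case False then show ?thesis using S[of s] by auto
    qed
  qed
qed

lemma hD_bounded: "\<exists>M. \<forall>t. \<bar>hD j t\<bar> \<le> M"
proof -
  obtain M where M: "\<And>s. s \<ge> 0 \<Longrightarrow> \<bar>poly (Pp j) s * exp (- s)\<bar> \<le> M"
    using poly_exp_bounded by blast
  have "\<bar>hD j t\<bar> \<le> max M 0" for t
    using M[of "inverse t"] by (auto simp: hD_def)
  then show ?thesis by blast
qed

lemma Pp_Suc_0: "poly (Pp (Suc j)) 0 = 0"
  by simp

lemma hD_lim_top: "((\<lambda>t. hD j t) \<longlongrightarrow> poly (Pp j) 0) at_top"
proof -
  have i: "((\<lambda>t::real. inverse t) \<longlongrightarrow> 0) at_top"
    by (rule tendsto_inverse_0_at_top[OF filterlim_ident])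
  have "((\<lambda>t. poly (Pp j) (inverse t) * exp (- inverse t)) \<longlongrightarrow> poly (Pp j) 0 * exp (- 0)) at_top"
    by (intro tendsto_intros i isCont_tendsto_compose[OF _ i]) auto
  moreover have "\<forall>\<^sub>F t in at_top. poly (Pp j) (inverse t) * exp (- inverse t) = hD j t"
      unfolding eventually_at_top_linorder
      by (rule exI[of _ 1]) (auto simp: hD_def)
  ultimately have "((\<lambda>t. hD j t) \<longlongrightarrow> poly (Pp j) 0 * exp (- 0)) at_top"
    by (rule Lim_transform_eventually)
  then show ?thesis by simp
qed

lemma hD0_lim: "((\<lambda>t. hD 0 t) \<longlongrightarrow> 1) at_top"
  using hD_lim_top[of 0] by simp

lemma hDSuc_lim: "((\<lambda>t. hD (Suc j) t) \<longlongrightarrow> 0) at_top"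
  using hD_lim_top[of "Suc j"] by simp

lemma vec2_decomp: "(y::real^2) = (y$1) *\<^sub>R axis 1 1 + (y$2) *\<^sub>R axis 2 1"
  by (simp add: vec_eq_iff forall_2 axis_def)

lemma smooth_dir_deriv2:
  fixes \<Psi> :: "real^2 \<Rightarrow> real"
  assumes sm: "smooth \<Psi>"
  shows "((\<lambda>s. \<Psi> (p + s *\<^sub>R w)) has_real_derivative (w$1 * pd 1 \<Psi> p + w$2 * pd 2 \<Psi> p)) (at 0)"
proof -
  define e1 :: "real^2" where "e1 = axis 1 1"
  define e2 :: "real^2" where "e2 = axis 2 1"
  define f where "f u v = \<Psi> (u *\<^sub>R e1 + v *\<^sub>R e2)" for u v
  define x0 where "x0 = p$1"
  define y0 where "y0 = p$2"
  have pdec: "p = x0 *\<^sub>R e1 + y0 *\<^sub>R e2" unfolding x0_def y0_def e1_def e2_def by (rule vec2_decomp)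
  have fx: "((\<lambda>u. f u y0) has_derivative (*) (pd 1 \<Psi> p)) (at x0)"
  proof -
    have g: "((\<lambda>t. \<Psi> (p + t *\<^sub>R e1)) has_real_derivative pd 1 \<Psi> p) (at ((\<lambda>u. u - x0) x0))"
      using smooth_D(2)[OF sm, of p 1] by (simp add: e1_def)
    have s: "((\<lambda>u. u - x0) has_real_derivative 1) (at x0)"
      by (auto intro!: derivative_eq_intros)
    have "((\<lambda>u. \<Psi> (p + (u - x0) *\<^sub>R e1)) has_real_derivative pd 1 \<Psi> p * 1) (at x0)"
      using DERIV_chain2[OF g s] by simp
    moreover have "\<Psi> (p + (u - x0) *\<^sub>R e1) = f u y0" for u
      by (simp add: f_def pdec algebra_simps)
    ultimately show ?thesis by (simp add: has_field_derivative_def)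
  qed
  have bl: "blinfun_apply (c *\<^sub>R (id_blinfun::real\<Rightarrow>\<^sub>Lreal)) = (*) c" for c
    by (rule ext) (simp add: scaleR_blinfun.rep_eq)
  have fy: "((\<lambda>v. f x v) has_derivative blinfun_apply (pd 2 \<Psi> (x *\<^sub>R e1 + y *\<^sub>R e2) *\<^sub>R id_blinfun)) (at y)" for x y
  proof -
    let ?q = "x *\<^sub>R e1 + y *\<^sub>R e2"
    have g: "((\<lambda>t. \<Psi> (?q + t *\<^sub>R e2)) has_real_derivative pd 2 \<Psi> ?q) (at ((\<lambda>u. u - y) y))"
      using smooth_D(2)[OF sm, of ?q 2] by (simp add: e2_def)
    have s: "((\<lambda>u. u - y) has_real_derivative 1) (at y)"
      by (auto intro!: derivative_eq_intros)
    have "((\<lambda>u. \<Psi> (?q + (u - y) *\<^sub>R e2)) has_real_derivative pd 2 \<Psi> ?q * 1) (at y)"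
      using DERIV_chain2[OF g s] by simp
    moreover have "\<Psi> (?q + (u - y) *\<^sub>R e2) = f x u" for u
      by (simp add: f_def algebra_simps)
    ultimately show ?thesis by (simp add: has_field_derivative_def bl)
  qed
  have c2: "continuous_on UNIV (pd 2 \<Psi>)"
    using smooth_D(1)[OF smooth_pds[OF sm, of "[2]"]] by simp
  have cont: "continuous (at (x0, y0) within UNIV \<times> UNIV) (\<lambda>(x, y). pd 2 \<Psi> (x *\<^sub>R e1 + y *\<^sub>R e2) *\<^sub>R (id_blinfun::real\<Rightarrow>\<^sub>Lreal))"
  proof -
    have "continuous_on UNIV (\<lambda>z::real\<times>real. pd 2 \<Psi> (fst z *\<^sub>R e1 + snd z *\<^sub>R e2) *\<^sub>R (id_blinfun::real\<Rightarrow>\<^sub>Lreal))"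
      by (intro continuous_intros continuous_on_compose2[OF c2]) auto
    then show ?thesis
      unfolding continuous_on_eq_continuous_within case_prod_beta' by auto
  qed
  have D: "((\<lambda>(x, y). f x y) has_derivative (\<lambda>(tx, ty). pd 1 \<Psi> p * tx + blinfun_apply (pd 2 \<Psi> (x0 *\<^sub>R e1 + y0 *\<^sub>R e2) *\<^sub>R id_blinfun) ty))
      (at (x0, y0) within UNIV \<times> UNIV)"
    by (rule has_derivative_partialsI[OF fx fy cont]) auto
  have D': "((\<lambda>(x, y). f x y) has_derivative (\<lambda>(tx, ty). tx * pd 1 \<Psi> p + ty * pd 2 \<Psi> p)) (at (x0, y0))"
    using D by (simp add: pdec[symmetric] bl mult.commute)
  have G: "((\<lambda>s. (x0 + s * w$1, y0 + s * w$2)) has_derivative (\<lambda>h. (h * w$1, h * w$2))) (at 0)"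
    by (auto intro!: derivative_eq_intros)
  have C: "((\<lambda>s. (\<lambda>(x, y). f x y) (x0 + s * w$1, y0 + s * w$2)) has_derivative
      (\<lambda>h. (\<lambda>(tx, ty). tx * pd 1 \<Psi> p + ty * pd 2 \<Psi> p) (h * w$1, h * w$2))) (at 0)"
  proof -
    have D'': "((\<lambda>(x, y). f x y) has_derivative (\<lambda>(tx, ty). tx * pd 1 \<Psi> p + ty * pd 2 \<Psi> p)) (at ((\<lambda>s. (x0 + s * w$1, y0 + s * w$2)) 0))"
      using D' by simp
    show ?thesis using diff_chain_at[OF G D''] by (simp add: o_def)
  qed
  have E: "(\<lambda>s. (\<lambda>(x, y). f x y) (x0 + s * w$1, y0 + s * w$2)) = (\<lambda>s. \<Psi> (p + s *\<^sub>R w))"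
  proof
    fix s
    have "p + s *\<^sub>R w = (x0 + s * w$1) *\<^sub>R e1 + (y0 + s * w$2) *\<^sub>R e2"
      by (simp add: vec_eq_iff forall_2 x0_def y0_def e1_def e2_def axis_def)
    then show "(\<lambda>(x, y). f x y) (x0 + s * w$1, y0 + s * w$2) = \<Psi> (p + s *\<^sub>R w)"
      by (simp add: f_def)
  qed
  have F: "(\<lambda>h. (\<lambda>(tx, ty). tx * pd 1 \<Psi> p + ty * pd 2 \<Psi> p) (h * w$1, h * w$2)) = (*) (w$1 * pd 1 \<Psi> p + w$2 * pd 2 \<Psi> p)"
    by (auto simp: algebra_simps)
  show ?thesis
    using C unfolding E F has_field_derivative_def .
qed

definition qv :: "('N::finite \<Rightarrow> real) \<Rightarrow> real^'N \<Rightarrow> real^2" where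
  "qv lam x = vector [(norm x)^2, wnorm2 lam x]"

lemma vector2_eq: "(vector [a, b] :: real^2) = a *\<^sub>R axis 1 1 + b *\<^sub>R axis 2 1"
  by (simp add: vec_eq_iff forall_2 axis_def)

lemma norm_sq_sum: "(norm (x::real^'N::finite))^2 = (\<Sum>l\<in>UNIV. (x$l)^2)"
proof -
  have "(norm x)^2 = inner x x" by (rule power2_norm_eq_inner)
  then show ?thesis by (simp add: inner_vec_def power2_eq_square)
qed

lemma qv_cont: "continuous_on UNIV (qv lam)"
  unfolding qv_def vector2_eq wnorm2_def divide_inverse
  by (intro continuous_intros)

lemma axis_comp: "(x + t *\<^sub>R axis k 1) $ l = x $ l + (if l = k then t else 0)"
  by (simp add: axis_def)

lemma sum_shift_sq:
  fixes x :: "real^'N::finite" and c :: "'N \<Rightarrow> real"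
  shows
  "(\<Sum>l\<in>UNIV. (x $ l + (if l = k then t else 0))^2 * c l) = (\<Sum>l\<in>UNIV. (x$l)^2 * c l) + (2*t*x$k + t^2) * c k"
proof -
  have "(x $ l + (if l = k then t else 0))^2 * c l = (x$l)^2 * c l + (if l = k then (2*t*x$k + t^2) * c k else 0)" for l
    by (auto simp: power2_eq_square algebra_simps)
  then show ?thesis by (simp add: sum.distrib)
qed

lemma qv_shift: "qv lam (x + t *\<^sub>R axis k 1) = qv lam x + (2*t*x$k + t^2) *\<^sub>R vector [1, 1/lam k]"
proof -
  have a: "(norm (x + t *\<^sub>R axis k 1))^2 = (norm x)^2 + (2*t*x$k + t^2)"
    unfolding norm_sq_sum axis_comp using sum_shift_sq[of x k t "\<lambda>_. 1"] by simp
  have b: "wnorm2 lam (x + t *\<^sub>R axis k 1) = wnorm2 lam x + (2*t*x$k + t^2) * (1 / lam k)"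
    unfolding wnorm2_def axis_comp using sum_shift_sq[of x k t "\<lambda>l. 1 / lam l"] by simp
  show ?thesis
    by (simp add: qv_def a b vec_eq_iff forall_2)
qed

lemma comp_deriv:
  fixes \<Psi> :: "real^2 \<Rightarrow> real"
  assumes sm: "smooth \<Psi>"
  shows "((\<lambda>t. \<Psi> (qv lam (x + t *\<^sub>R axis k 1))) has_real_derivative
      2 * x$k * (pd 1 \<Psi> (qv lam x) + pd 2 \<Psi> (qv lam x) / lam k)) (at 0)"
proof -
  define w :: "real^2" where "w = vector [1, 1/lam k]"
  have d1: "((\<lambda>s. \<Psi> (qv lam x + s *\<^sub>R w)) has_real_derivative (w$1 * pd 1 \<Psi> (qv lam x) + w$2 * pd 2 \<Psi> (qv lam x)))
      (at ((\<lambda>t. 2*t*x$k + t^2) 0))"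
    using smooth_dir_deriv2[OF sm] by simp
  have d2: "((\<lambda>t. 2*t*x$k + t^2) has_real_derivative 2 * x$k) (at 0)"
    by (auto intro!: derivative_eq_intros)
  have "((\<lambda>t. \<Psi> (qv lam x + (2*t*x$k + t^2) *\<^sub>R w)) has_real_derivative
      (w$1 * pd 1 \<Psi> (qv lam x) + w$2 * pd 2 \<Psi> (qv lam x)) * (2 * x$k)) (at 0)"
    by (rule DERIV_chain2[OF d1 d2])
  then show ?thesis
    by (simp add: qv_shift w_def field_simps)
qed

lemma pd_comp:
  assumes sm: "smooth \<Psi>"
  shows "pd k (\<lambda>x. \<Psi> (qv lam x)) x = 2 * x$k * (pd 1 \<Psi> (qv lam x) + pd 2 \<Psi> (qv lam x) / lam k)"
  using pd_eqI[OF comp_deriv[OF sm]] .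

lemma pd_comp_fun:
  assumes sm: "smooth \<Psi>"
  shows "pd k (\<lambda>x. \<Psi> (qv lam x)) = (\<lambda>x. 2 * x$k * (pd 1 \<Psi> (qv lam x) + pd 2 \<Psi> (qv lam x) / lam k))"
  using pd_comp[OF sm] by auto

lemma coord_deriv: "((\<lambda>t. (x + t *\<^sub>R axis k 1) $ j) has_real_derivative (if j = k then 1 else 0)) (at 0)"
  by (simp add: axis_def) (auto intro!: derivative_eq_intros)

lemma smooth_comp:
  fixes \<Psi> :: "real^2 \<Rightarrow> real" and lam :: "'N::finite \<Rightarrow> real"
  assumes sm: "smooth \<Psi>"
  shows "smooth (\<lambda>x. \<Psi> (qv lam x))"
proof -
  define B :: "(real^'N \<Rightarrow> real) set" where
    "B = {(\<lambda>x. \<Phi> (qv lam x)) | \<Phi>. smooth \<Phi>} \<union> {(\<lambda>x. x $ j) | j. True}"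
  have inB: "(\<lambda>x. \<Phi> (qv lam x)) \<in> alg B" if "smooth \<Phi>" for \<Phi>
    by (rule alg.base) (use that in \<open>auto simp: B_def\<close>)
  have coordB: "(\<lambda>x. x $ j) \<in> alg B" for j
    by (rule alg.base) (auto simp: B_def)
  show ?thesis
  proof (rule alg_smooth[where B=B])
    fix b assume "b \<in> B"
    then consider (c) \<Phi> where "smooth \<Phi>" "b = (\<lambda>x. \<Phi> (qv lam x))" | (d) j where "b = (\<lambda>x. x $ j)"
      unfolding B_def by blast
    then show "continuous_on UNIV b \<and>
      (\<forall>k x. ((\<lambda>t. b (x + t *\<^sub>R axis k 1)) has_real_derivative pd k b x) (at 0)) \<and> (\<forall>k. pd k b \<in> alg B)"
    proof cases
      case c
      have cont: "continuous_on UNIV b"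
        unfolding c(2) by (rule continuous_on_compose2[OF smooth_D(1)[OF c(1)] qv_cont]) auto
      have der: "((\<lambda>t. b (x + t *\<^sub>R axis k 1)) has_real_derivative pd k b x) (at 0)" for k x
        unfolding c(2) pd_comp[OF c(1)] by (rule comp_deriv[OF c(1)])
      have "pd k b \<in> alg B" for k
      proof -
        have s1: "smooth (pd 1 \<Phi>)" using smooth_pds[OF c(1), of "[1]"] by simp
        have s2: "smooth (pd 2 \<Phi>)" using smooth_pds[OF c(1), of "[2]"] by simp
        have m: "(\<lambda>x. (\<lambda>x. 2) x * (\<lambda>x. x $ k) x * ((\<lambda>x. pd 1 \<Phi> (qv lam x)) x + (\<lambda>x. 1 / lam k) x * (\<lambda>x. pd 2 \<Phi> (qv lam x)) x)) \<in> alg B"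
          by (intro alg.mult alg.add alg.const coordB inB s1 s2)
        have "pd k b = (\<lambda>x. 2 * x $ k * (pd 1 \<Phi> (qv lam x) + 1 / lam k * pd 2 \<Phi> (qv lam x)))"
          unfolding c(2) pd_comp_fun[OF c(1)] by simp
        with m show ?thesis by simp
      qed
      with cont der show ?thesis by blast
    next
      case d
      have der: "((\<lambda>t. b (x + t *\<^sub>R axis k 1)) has_real_derivative (if j = k then 1 else 0)) (at 0)" for k x
        unfolding d by (rule coord_deriv)
      have pdb: "pd k b = (\<lambda>x. if j = k then 1 else 0)" for k
        using pd_eqI[OF der] by auto
      show ?thesis
        using der pdb unfolding d by (auto intro!: continuous_intros alg.const)
    qed
  qed (rule inB[OF sm])
qed

lemma pd_mult_fun:
  assumes "smooth f" "smooth g"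
  shows "pd k (\<lambda>x. f x * g x) = (\<lambda>x. pd k f x * g x + f x * pd k g x)"
proof
  fix x
  have d: "((\<lambda>t. f (x + t *\<^sub>R axis k 1) * g (x + t *\<^sub>R axis k 1)) has_real_derivative pd k f x * g x + f x * pd k g x) (at 0)"
    using DERIV_mult[OF smooth_D(2)[OF assms(1)] smooth_D(2)[OF assms(2)], of x k x k] by (simp add: mult.commute)
  show "pd k (\<lambda>x. f x * g x) x = pd k f x * g x + f x * pd k g x"
    by (rule pd_eqI) (use d in simp)
qed

lemma pd_add_fun:
  assumes "smooth f" "smooth g"
  shows "pd k (\<lambda>x. f x + g x) = (\<lambda>x. pd k f x + pd k g x)"
proof
  fix x
  have d: "((\<lambda>t. f (x + t *\<^sub>R axis k 1) + g (x + t *\<^sub>R axis k 1)) has_real_derivative pd k f x + pd k g x) (at 0)"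
    using DERIV_add[OF smooth_D(2)[OF assms(1)] smooth_D(2)[OF assms(2)], of x k x k] by simp
  show "pd k (\<lambda>x. f x + g x) x = pd k f x + pd k g x"
    by (rule pd_eqI) (use d in simp)
qed

lemma smooth_mult:
  assumes f: "smooth f" and g: "smooth g"
  shows "smooth (\<lambda>x. f x * g x)"
proof (rule alg_smooth[where B="{pds ks f | ks. True} \<union> {pds ks g | ks. True}"])
  let ?B = "{pds ks f | ks. True} \<union> {pds ks g | ks. True}"
  fix b assume "b \<in> ?B"
  then obtain h ks where h: "smooth h" "b = pds ks h" "\<And>ms. pds ms h \<in> ?B" using f g by blast
  have sb: "smooth b" using h smooth_pds by blast
  have "pd k b \<in> alg ?B" for k
    using h(3)[of "k # ks"] h(2) by (auto intro: alg.base)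
  then show "continuous_on UNIV b \<and>
      (\<forall>k x. ((\<lambda>t. b (x + t *\<^sub>R axis k 1)) has_real_derivative pd k b x) (at 0)) \<and> (\<forall>k. pd k b \<in> alg ?B)"
    using smooth_D[OF sb] by blast
next
  let ?B = "{pds ks f | ks. True} \<union> {pds ks g | ks. True}"
  have "f \<in> alg ?B" by (rule alg.base) (auto intro: exI[of _ "[]"])
  moreover have "g \<in> alg ?B" by (rule alg.base) (auto intro: exI[of _ "[]"])
  ultimately show "(\<lambda>x. f x * g x) \<in> alg ?B" by (rule alg.mult)
qed

definition ELt :: "('N::finite \<Rightarrow> real) \<Rightarrow> real \<Rightarrow> ('N \<Rightarrow> real) \<Rightarrow> (real^2 \<Rightarrow> real) \<Rightarrow> real^'N \<Rightarrow> real" where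
  "ELt lam a del \<Psi> x = (\<Sum>l\<in>UNIV. lam l * (a/2 * (1 + del l) *
      (2 * (pd 1 \<Psi> (qv lam x) + pd 2 \<Psi> (qv lam x) / lam l) +
       2 * x$l * (2 * x$l * (pd 1 (pd 1 \<Psi>) (qv lam x) + pd 2 (pd 1 \<Psi>) (qv lam x) / lam l)
                 + 2 * x$l * (pd 1 (pd 2 \<Psi>) (qv lam x) + pd 2 (pd 2 \<Psi>) (qv lam x) / lam l) / lam l))
      - x$l * (2 * x$l * (pd 1 \<Psi> (qv lam x) + pd 2 \<Psi> (qv lam x) / lam l))))"

lemma pd_pd_comp:
  assumes sm: "smooth \<Psi>"
  shows "pd l (pd l (\<lambda>x. \<Psi> (qv lam x))) x =
      2 * (pd 1 \<Psi> (qv lam x) + pd 2 \<Psi> (qv lam x) / lam l) +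
       2 * x$l * (2 * x$l * (pd 1 (pd 1 \<Psi>) (qv lam x) + pd 2 (pd 1 \<Psi>) (qv lam x) / lam l)
                 + 2 * x$l * (pd 1 (pd 2 \<Psi>) (qv lam x) + pd 2 (pd 2 \<Psi>) (qv lam x) / lam l) / lam l)"
proof -
  have s1: "smooth (pd 1 \<Psi>)" using smooth_pds[OF sm, of "[1]"] by simp
  have s2: "smooth (pd 2 \<Psi>)" using smooth_pds[OF sm, of "[2]"] by simp
  have c: "((\<lambda>t. (x + t *\<^sub>R axis l 1) $ l) has_real_derivative 1) (at 0)"
    using coord_deriv[of x l l] by simp
  note d1 = comp_deriv[OF s1, of lam x l]
  note d2 = comp_deriv[OF s2, of lam x l]
  have d: "((\<lambda>t. 2 * (x + t *\<^sub>R axis l 1) $ l * (pd 1 \<Psi> (qv lam (x + t *\<^sub>R axis l 1)) + pd 2 \<Psi> (qv lam (x + t *\<^sub>R axis l 1)) / lam l))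
      has_real_derivative
      2 * 1 * (pd 1 \<Psi> (qv lam x) + pd 2 \<Psi> (qv lam x) / lam l) +
       2 * x$l * (2 * x$l * (pd 1 (pd 1 \<Psi>) (qv lam x) + pd 2 (pd 1 \<Psi>) (qv lam x) / lam l)
                 + 2 * x$l * (pd 1 (pd 2 \<Psi>) (qv lam x) + pd 2 (pd 2 \<Psi>) (qv lam x) / lam l) / lam l)) (at 0)"
    using DERIV_mult[OF DERIV_cmult[OF c, of 2] DERIV_add[OF d1 DERIV_cdivide[OF d2, of "lam l"]]]
    by (simp add: algebra_simps)
  show ?thesis
    unfolding pd_comp_fun[OF sm] by (rule pd_eqI) (use d in simp)
qed

lemma Ltil_comp:
  assumes sm: "smooth \<Psi>"
  shows "Ltil lam a del (\<lambda>x. \<Psi> (qv lam x)) x = ELt lam a del \<Psi> x"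
  unfolding Ltil_def ELt_def pd_pd_comp[OF sm] pd_comp[OF sm] by simp

definition hR :: "nat \<Rightarrow> real \<Rightarrow> real^2 \<Rightarrow> real" where
  "hR j R y = hD j (R - y$1)"

lemma hR_deriv: "((\<lambda>t. hR j R (y + t *\<^sub>R axis k 1)) has_real_derivative (if k = 1 then -1 else 0) * hR (Suc j) R y) (at 0)"
proof (cases "k = 1")
  case True
  have i: "((\<lambda>t. R - y$1 - t) has_real_derivative -1) (at 0)"
    by (auto intro!: derivative_eq_intros)
  have h: "(hD j has_real_derivative hD (Suc j) (R - y$1)) (at ((\<lambda>t. R - y$1 - t) 0))"
    using hD_deriv by simp
  show ?thesis using DERIV_chain2[OF h i] True by (simp add: hR_def axis_comp algebra_simps)
next
  case False
  have "axis k (1::real) $ 1 = 0" using False by (simp add: axis_def)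
  then show ?thesis using False by (simp add: hR_def)
qed

lemma pd_hR: "pd k (hR j R) = (\<lambda>y. (if k = 1 then -1 else 0) * hR (Suc j) R y)"
  using pd_eqI[OF hR_deriv] by auto

lemma smooth_hR: "smooth (hR j R)"
proof (rule alg_smooth[where B="{hR i R | i. True}"])
  fix b assume "b \<in> {hR i R | i. True}"
  then obtain i where b: "b = hR i R" by blast
  have "continuous_on UNIV b"
    unfolding b hR_def by (rule continuous_on_compose2[OF hD_cont]) (auto intro!: continuous_intros)
  moreover have "pd k b \<in> alg {hR i R | i. True}" for k
    unfolding b pd_hR by (intro alg.mult alg.const alg.base) auto
  ultimately show "continuous_on UNIV b \<and>
      (\<forall>k x. ((\<lambda>t. b (x + t *\<^sub>R axis k 1)) has_real_derivative pd k b x) (at 0)) \<and> (\<forall>k. pd k b \<in> alg {hR i R | i. True})"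
    unfolding b pd_hR using hR_deriv by blast
qed (auto intro: alg.base)

lemma space_path_space: "space path_space = cpaths"
  unfolding path_space_def by (rule space_measure_of) auto

lemma sets_path_space: "sets path_space = sigma_sets cpaths {(\<lambda>\<omega>. \<omega> t) -` A \<inter> cpaths | t A. 0 \<le> t \<and> A \<in> sets borel}"
  unfolding path_space_def by (rule sets_measure_of) auto

lemma meas_eval:
  assumes "0 \<le> t"
  shows "(\<lambda>\<omega>. \<omega> t) \<in> measurable path_space (borel :: 'a::topological_space measure)"
proof (rule measurableI)
  fix A :: "'a set" assume "A \<in> sets borel"
  then have "(\<lambda>\<omega>. \<omega> t) -` A \<inter> cpaths \<in> sigma_sets cpaths {(\<lambda>\<omega>. \<omega> t) -` A \<inter> cpaths | t A. 0 \<le> t \<and> A \<in> sets borel}"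
    using assms by (intro sigma_sets.Basic) blast
  then show "(\<lambda>\<omega>. \<omega> t) -` A \<inter> space path_space \<in> sets path_space"
    by (simp add: space_path_space sets_path_space)
qed simp

lemma test_fun_bounded:
  assumes "test_fun f"
  shows "\<exists>B. \<forall>y. \<bar>f y\<bar> \<le> B"
proof -
  from assms obtain r where r: "\<And>x. r < norm x \<Longrightarrow> f x = 0" and sm: "smooth f"
    unfolding test_fun_def by blast
  have c: "continuous_on UNIV f" using sm unfolding smooth_def by (metis pds.simps(1))
  have "compact (f ` cball 0 r)"
    by (intro compact_continuous_image continuous_on_subset[OF c]) auto
  then obtain B where B: "\<And>y. y \<in> f ` cball 0 r \<Longrightarrow> norm y \<le> B"
    using compact_imp_bounded bounded_iff by metis
  have "\<bar>f y\<bar> \<le> max B 0" for y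
  proof (cases "norm y \<le> r")
    case True then show ?thesis using B[of "f y"] by auto
  next
    case False then show ?thesis using r[of y] by auto
  qed
  then show ?thesis by blast
qed

lemma cont_f_of_test: "test_fun f \<Longrightarrow> continuous_on UNIV f"
  unfolding test_fun_def smooth_def by (metis pds.simps(1))

lemma mp_step:
  fixes L :: "(real^'N::finite \<Rightarrow> real) \<Rightarrow> real^'N \<Rightarrow> real" and t :: real
  assumes sol: "solves_MP L x P" and tf: "test_fun f" and t: "0 \<le> t"
  shows "integrable P (\<lambda>\<omega>. f (\<omega> t))"
    "integrable P (\<lambda>\<omega>. integral {0..t} (\<lambda>r. L f (\<omega> r)))"
    "(\<integral>\<omega>. f (\<omega> t) \<partial>P) - f x = (\<integral>\<omega>. integral {0..t} (\<lambda>r. L f (\<omega> r)) \<partial>P)"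
proof -
  define X where "X = (\<lambda>(t::real) \<omega>. f (\<omega> t) - f (\<omega> 0) - integral {0..t} (\<lambda>r. L f (\<omega> r)))"
  have ps: "prob_space P" and sP: "sets P = sets path_space" and ae0: "AE \<omega> in P. \<omega> 0 = x"
    and mart: "martingale P nat_filt X"
    using sol tf unfolding solves_MP_def X_def by auto
  interpret prob_space P by (rule ps)
  obtain B where B: "\<And>y. \<bar>f y\<bar> \<le> B" using test_fun_bounded[OF tf] by blast
  have fm: "f \<in> borel_measurable borel"
    by (rule borel_measurable_continuous_onI[OF cont_f_of_test[OF tf]])
  have ev: "(\<lambda>\<omega>. \<omega> s) \<in> measurable P borel" if "0 \<le> s" for s
    using meas_eval[OF that] measurable_cong_sets[OF sP refl] by blast
  have intf: "integrable P (\<lambda>\<omega>. f (\<omega> s))" if "0 \<le> s" for s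
    by (rule integrable_const_bound[where B=B]) (use B measurable_compose[OF ev[OF that] fm] in auto)
  show i1: "integrable P (\<lambda>\<omega>. f (\<omega> t))" by (rule intf[OF t])
  have intX: "integrable P (X t)" and sf0: "sigma_finite_subalgebra P (nat_filt 0)"
    and ce: "AE \<omega> in P. real_cond_exp P (nat_filt 0) (X t) \<omega> = X 0 \<omega>"
    using mart t unfolding martingale_def by auto
  have X0: "X 0 \<omega> = 0" for \<omega> by (simp add: X_def)
  have "(\<integral>\<omega>. X t \<omega> \<partial>P) = (\<integral>\<omega>. real_cond_exp P (nat_filt 0) (X t) \<omega> \<partial>P)"
    using sigma_finite_subalgebra.real_cond_exp_int(2)[OF sf0 intX] by simp
  also have "\<dots> = 0"
    by (rule integral_eq_zero_AE) (use ce X0 in auto)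
  finally have EX: "(\<integral>\<omega>. X t \<omega> \<partial>P) = 0" .
  have Ieq: "(\<lambda>\<omega>. integral {0..t} (\<lambda>r. L f (\<omega> r))) = (\<lambda>\<omega>. f (\<omega> t) - f (\<omega> 0) - X t \<omega>)"
    by (auto simp: X_def)
  show i2: "integrable P (\<lambda>\<omega>. integral {0..t} (\<lambda>r. L f (\<omega> r)))"
    unfolding Ieq using i1 intf[of 0] intX by (intro Bochner_Integration.integrable_diff) auto
  have f0: "(\<integral>\<omega>. f (\<omega> 0) \<partial>P) = f x"
  proof -
    have "(\<integral>\<omega>. f (\<omega> 0) \<partial>P) = (\<integral>\<omega>. f x \<partial>P)"
      by (rule integral_cong_AE) (use ae0 measurable_compose[OF ev fm] in auto)
    then show ?thesis by (simp add: prob_space)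
  qed
  show "(\<integral>\<omega>. f (\<omega> t) \<partial>P) - f x = (\<integral>\<omega>. integral {0..t} (\<lambda>r. L f (\<omega> r)) \<partial>P)"
    unfolding Ieq using i1 intf[of 0] intX EX f0
    by (subst Bochner_Integration.integral_diff; (intro integrable_diff)?; simp?)+
qed

lemma avg_lim:
  fixes g :: "'a::topological_space \<Rightarrow> real"
  assumes w: "\<omega> \<in> cpaths" and gc: "continuous_on UNIV g"
  shows "((\<lambda>n. integral {0..1 / real (Suc n)} (\<lambda>r. g (\<omega> r)) / (1 / real (Suc n))) \<longlongrightarrow> g (\<omega> 0)) sequentially"
proof -
  have wc: "continuous_on {0..} \<omega>" using w unfolding cpaths_def by auto
  have hc: "continuous_on {0..1} (\<lambda>r. g (\<omega> r))"
    by (rule continuous_on_compose2[OF gc continuous_on_subset[OF wc]]) auto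
  have "((\<lambda>u. integral {0..u} (\<lambda>r. g (\<omega> r))) has_vector_derivative g (\<omega> 0)) (at 0 within {0..1})"
    using integral_has_vector_derivative[OF hc, of 0] by simp
  then have "((\<lambda>u. integral {0..u} (\<lambda>r. g (\<omega> r))) has_real_derivative g (\<omega> 0)) (at 0 within {0..1})"
    by (simp add: has_real_derivative_iff_has_vector_derivative)
  then have l: "((\<lambda>y. (integral {0..y} (\<lambda>r. g (\<omega> r)) - integral {0..0} (\<lambda>r. g (\<omega> r))) / (y - 0)) \<longlongrightarrow> g (\<omega> 0)) (at 0 within {0..1})"
    by (simp add: has_field_derivative_iff)
  have tn: "filterlim (\<lambda>n. 1 / real (Suc n)) (at 0 within {0..1}) sequentially"
    unfolding filterlim_at
  proof
    show "\<forall>\<^sub>F n in sequentially. 1 / real (Suc n) \<in> {0..1} \<and> 1 / real (Suc n) \<noteq> 0"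
      by (auto simp: field_simps)
    show "((\<lambda>n. 1 / real (Suc n)) \<longlongrightarrow> 0) sequentially"
      using LIMSEQ_inverse_real_of_nat by (simp add: inverse_eq_divide)
  qed
  show ?thesis using filterlim_compose[OF l tn] by simp
qed

lemma avg_bound:
  fixes g :: "'a::topological_space \<Rightarrow> real"
  assumes w: "\<omega> \<in> cpaths" and gc: "continuous_on UNIV g" and M: "\<And>y. \<bar>g y\<bar> \<le> M" and t: "0 \<le> t"
  shows "\<bar>integral {0..t} (\<lambda>r. g (\<omega> r))\<bar> \<le> M * t"
proof -
  have wc: "continuous_on {0..} \<omega>" using w unfolding cpaths_def by auto
  have hc: "continuous_on {0..t} (\<lambda>r. g (\<omega> r))"
    by (rule continuous_on_compose2[OF gc continuous_on_subset[OF wc]]) auto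
  show ?thesis using integral_bound[OF t hc, of M] M by simp
qed

lemma space_solves: "solves_MP L x P \<Longrightarrow> space P = cpaths"
  unfolding solves_MP_def using sets_eq_imp_space_eq space_path_space by metis

lemma gen_lim:
  fixes L :: "(real^'N::finite \<Rightarrow> real) \<Rightarrow> real^'N \<Rightarrow> real"
  assumes sol: "solves_MP L x P" and tf: "test_fun f" and Lc: "continuous_on UNIV (L f)"
    and M: "\<And>y. \<bar>L f y\<bar> \<le> M"
  shows "((\<lambda>n. ((\<integral>\<omega>. f (\<omega> (1 / real (Suc n))) \<partial>P) - f x) / (1 / real (Suc n))) \<longlongrightarrow> L f x) sequentially"
proof -
  define tn where "tn n = 1 / real (Suc n)" for n
  have tn0: "0 \<le> tn n" "0 < tn n" for n by (auto simp: tn_def)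
  have ps: "prob_space P" and sP: "sets P = sets path_space" and ae0: "AE \<omega> in P. \<omega> 0 = x"
    using sol unfolding solves_MP_def by auto
  interpret prob_space P by (rule ps)
  have spP: "space P = cpaths" by (rule space_solves[OF sol])
  note st = mp_step[OF sol tf tn0(1)]
  have ev0: "(\<lambda>\<omega>. \<omega> 0) \<in> measurable P borel"
    using meas_eval[of 0] measurable_cong_sets[OF sP refl] by auto
  have Lm: "L f \<in> borel_measurable borel" by (rule borel_measurable_continuous_onI[OF Lc])
  have "(\<lambda>n. \<integral>\<omega>. integral {0..tn n} (\<lambda>r. L f (\<omega> r)) / tn n \<partial>P) \<longlonglongrightarrow> (\<integral>\<omega>. L f (\<omega> 0) \<partial>P)"
  proof (rule integral_dominated_convergence[where w="\<lambda>_. M"])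
    show "(\<lambda>\<omega>. L f (\<omega> 0)) \<in> borel_measurable P" using measurable_compose[OF ev0 Lm] .
    show "(\<lambda>\<omega>. integral {0..tn n} (\<lambda>r. L f (\<omega> r)) / tn n) \<in> borel_measurable P" for n
      using borel_measurable_integrable[OF st(2)[of n]] by measurable
    show "integrable P (\<lambda>_. M)" by simp
    show "AE \<omega> in P. (\<lambda>n. integral {0..tn n} (\<lambda>r. L f (\<omega> r)) / tn n) \<longlonglongrightarrow> L f (\<omega> 0)"
      using avg_lim[OF _ Lc] spP unfolding tn_def by (intro AE_I2) auto
    show "AE \<omega> in P. norm (integral {0..tn n} (\<lambda>r. L f (\<omega> r)) / tn n) \<le> M" for n
    proof (intro AE_I2)
      fix \<omega> assume "\<omega> \<in> space P"
      then have "\<bar>integral {0..tn n} (\<lambda>r. L f (\<omega> r))\<bar> \<le> M * tn n"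
        using avg_bound[OF _ Lc M tn0(1)] spP by auto
      then show "norm (integral {0..tn n} (\<lambda>r. L f (\<omega> r)) / tn n) \<le> M"
        using tn0(2)[of n] by (simp add: divide_le_eq abs_div)
    qed
  qed
  moreover have "(\<integral>\<omega>. L f (\<omega> 0) \<partial>P) = L f x"
  proof -
    have "(\<integral>\<omega>. L f (\<omega> 0) \<partial>P) = (\<integral>\<omega>. L f x \<partial>P)"
      by (rule integral_cong_AE) (use ae0 measurable_compose[OF ev0 Lm] in auto)
    then show ?thesis by (simp add: prob_space)
  qed
  moreover have "(\<integral>\<omega>. integral {0..tn n} (\<lambda>r. L f (\<omega> r)) / tn n \<partial>P) = ((\<integral>\<omega>. f (\<omega> (tn n)) \<partial>P) - f x) / tn n" for n
    using st(3)[of n] by simp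
  ultimately show ?thesis unfolding tn_def by simp
qed

lemma gen_bound:
  fixes L :: "(real^'N::finite \<Rightarrow> real) \<Rightarrow> real^'N \<Rightarrow> real"
  assumes sol: "solves_MP L x P" and tf: "test_fun f" and Lc: "continuous_on UNIV (L f)"
    and M: "\<And>y. \<bar>L f y\<bar> \<le> M" and t: "0 < t"
  shows "\<bar>((\<integral>\<omega>. f (\<omega> t) \<partial>P) - f x) / t\<bar> \<le> M"
proof -
  have ps: "prob_space P" using sol unfolding solves_MP_def by auto
  interpret prob_space P by (rule ps)
  have spP: "space P = cpaths" by (rule space_solves[OF sol])
  note st = mp_step[OF sol tf less_imp_le[OF t]]
  have "\<bar>\<integral>\<omega>. integral {0..t} (\<lambda>r. L f (\<omega> r)) \<partial>P\<bar> \<le> (\<integral>\<omega>. \<bar>integral {0..t} (\<lambda>r. L f (\<omega> r))\<bar> \<partial>P)"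
    using integral_norm_bound[of P "\<lambda>\<omega>. integral {0..t} (\<lambda>r. L f (\<omega> r))"] by simp
  also have "\<dots> \<le> (\<integral>\<omega>. M * t \<partial>P)"
    by (rule integral_mono) (use st(2) avg_bound[OF _ Lc M less_imp_le[OF t]] spP in auto)
  also have "\<dots> = M * t" by (simp add: prob_space)
  finally show ?thesis using st(3) t by (simp add: abs_div divide_le_eq)
qed

lemma kernel_lemma:
  fixes P :: "real^'N::finite \<Rightarrow> (real \<Rightarrow> real^'N) measure" and f :: "real^'N \<Rightarrow> real"
  assumes ps: "prob_space \<mu>" and sm: "sets \<mu> = sets borel"
    and sol: "\<And>x. solves_MP L x (P x)"
    and kern: "\<And>A. A \<in> sets borel \<Longrightarrow>
           (\<lambda>x. emeasure (P x) {\<omega>\<in>space (P x). \<omega> t \<in> A}) \<in> borel_measurable borel \<and>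
           (\<integral>\<^sup>+x. emeasure (P x) {\<omega>\<in>space (P x). \<omega> t \<in> A} \<partial>\<mu>) = emeasure \<mu> A"
    and t: "0 \<le> t"
    and fm: "f \<in> borel_measurable borel" and B: "\<And>y. \<bar>f y\<bar> \<le> B"
  shows "(\<lambda>x. \<integral>\<omega>. f (\<omega> t) \<partial>P x) \<in> borel_measurable \<mu>"
    "integrable \<mu> (\<lambda>x. \<integral>\<omega>. f (\<omega> t) \<partial>P x)"
    "(\<integral>x. (\<integral>\<omega>. f (\<omega> t) \<partial>P x) \<partial>\<mu>) = (\<integral>x. f x \<partial>\<mu>)"
proof -
  interpret mu: prob_space \<mu> by (rule ps)
  have spm: "space \<mu> = UNIV" using sets_eq_imp_space_eq[OF sm] by simp
  have psP: "prob_space (P x)" and sP: "sets (P x) = sets path_space" for x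
    using sol[of x] unfolding solves_MP_def by auto
  have ev: "(\<lambda>\<omega>. \<omega> t) \<in> measurable (P x) borel" for x
    using meas_eval[OF t] measurable_cong_sets[OF sP refl] by blast
  define K where "K x = distr (P x) borel (\<lambda>\<omega>. \<omega> t)" for x
  have sK: "sets (K x) = sets borel" for x by (simp add: K_def)
  have emK: "emeasure (K x) A = emeasure (P x) {\<omega>\<in>space (P x). \<omega> t \<in> A}" if "A \<in> sets borel" for x A
  proof -
    have "emeasure (K x) A = emeasure (P x) ((\<lambda>\<omega>. \<omega> t) -` A \<inter> space (P x))"
      unfolding K_def by (rule emeasure_distr[OF ev that])
    also have "(\<lambda>\<omega>. \<omega> t) -` A \<inter> space (P x) = {\<omega>\<in>space (P x). \<omega> t \<in> A}" by auto
    finally show ?thesis .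
  qed
  have Km: "K \<in> measurable \<mu> (subprob_algebra borel)"
  proof (rule measurable_subprob_algebra)
    fix a show "subprob_space (K a)"
      unfolding K_def by (intro prob_space_imp_subprob_space prob_space.prob_space_distr[OF psP ev])
    show "sets (K a) = sets borel" by (rule sK)
  next
    fix A :: "(real^'N) set" assume A: "A \<in> sets borel"
    have "(\<lambda>x. emeasure (P x) {\<omega>\<in>space (P x). \<omega> t \<in> A}) \<in> borel_measurable \<mu>"
      using kern[OF A] measurable_cong_sets[OF sm refl] by blast
    then show "(\<lambda>a. emeasure (K a) A) \<in> borel_measurable \<mu>"
      using emK[OF A] by simp
  qed
  have ne: "space \<mu> \<noteq> {}" by (simp add: spm)
  have sB: "sets (bind \<mu> K) = sets borel"
    by (rule sets_bind[OF _ ne]) (rule sK)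
  have bind: "bind \<mu> K = \<mu>"
  proof (rule measure_eqI)
    show "sets (bind \<mu> K) = sets \<mu>" using sB sm by simp
    fix A assume "A \<in> sets (bind \<mu> K)"
    then have A: "A \<in> sets borel" using sB by simp
    have "emeasure (bind \<mu> K) A = (\<integral>\<^sup>+x. emeasure (K x) A \<partial>\<mu>)"
      by (rule emeasure_bind[OF ne Km A])
    also have "\<dots> = (\<integral>\<^sup>+x. emeasure (P x) {\<omega>\<in>space (P x). \<omega> t \<in> A} \<partial>\<mu>)"
      using emK[OF A] by simp
    also have "\<dots> = emeasure \<mu> A" using kern[OF A] by simp
    finally show "emeasure (bind \<mu> K) A = emeasure \<mu> A" .
  qed
  have intK: "integral\<^sup>L (K x) f = (\<integral>\<omega>. f (\<omega> t) \<partial>P x)" for x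
    unfolding K_def by (rule integral_distr[OF ev fm])
  have meas: "(\<lambda>x. integral\<^sup>L (K x) f) \<in> borel_measurable \<mu>"
    using measurable_compose[OF Km integral_measurable_subprob_algebra[OF fm]] .
  have ib: "integral\<^sup>L (bind \<mu> K) f = (\<integral>x. integral\<^sup>L (K x) f \<partial>\<mu>)"
  proof (rule integral_bind[OF fm _ Km, where B=B and B'=1])
    show "\<And>x. x \<in> space borel \<Longrightarrow> \<bar>f x\<bar> \<le> B" using B by auto
    show "finite_measure \<mu>" by (rule mu.finite_measure_axioms)
    have "emeasure (K x) (space (K x)) = 1" for x
      unfolding K_def by (rule prob_space.emeasure_space_1[OF prob_space.prob_space_distr[OF psP ev]])
    then show "AE x in \<mu>. emeasure (K x) (space (K x)) \<le> ennreal 1"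
      by simp
  qed
  have bd: "\<bar>integral\<^sup>L (K x) f\<bar> \<le> B" for x
  proof -
    interpret px: prob_space "P x" by (rule psP)
    have i: "integrable (P x) (\<lambda>\<omega>. f (\<omega> t))"
      by (rule px.integrable_const_bound[where B=B]) (use B measurable_compose[OF ev fm] in auto)
    have "\<bar>\<integral>\<omega>. f (\<omega> t) \<partial>P x\<bar> \<le> (\<integral>\<omega>. \<bar>f (\<omega> t)\<bar> \<partial>P x)"
      using integral_norm_bound[of "P x" "\<lambda>\<omega>. f (\<omega> t)"] by simp
    also have "\<dots> \<le> (\<integral>\<omega>. B \<partial>P x)"
      by (rule integral_mono) (use i B in auto)
    finally show ?thesis using intK[of x] by (simp add: px.prob_space)
  qed
  have "integrable \<mu> (\<lambda>x. integral\<^sup>L (K x) f)"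
    by (rule mu.integrable_const_bound[where B=B]) (use bd meas in auto)
  then show "(\<lambda>x. \<integral>\<omega>. f (\<omega> t) \<partial>P x) \<in> borel_measurable \<mu>"
    "integrable \<mu> (\<lambda>x. \<integral>\<omega>. f (\<omega> t) \<partial>P x)"
    using meas unfolding intK by auto
  show "(\<integral>x. (\<integral>\<omega>. f (\<omega> t) \<partial>P x) \<partial>\<mu>) = (\<integral>x. f x \<partial>\<mu>)"
    using ib unfolding bind intK by simp
qed

lemma gen_zero:
  fixes L :: "(real^'N::finite \<Rightarrow> real) \<Rightarrow> real^'N \<Rightarrow> real"
  assumes stat: "stationary_prob L \<mu>" and tf: "test_fun f" and Lc: "continuous_on UNIV (L f)"
    and M: "\<And>y. \<bar>L f y\<bar> \<le> M"
  shows "(\<integral>x. L f x \<partial>\<mu>) = 0"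
proof -
  have ps: "prob_space \<mu>" and sm: "sets \<mu> = sets borel" using stat unfolding stationary_prob_def by auto
  have "\<exists>P. (\<forall>x. solves_MP L x (P x)) \<and>
        (\<forall>t\<ge>0. \<forall>A\<in>sets borel.
           (\<lambda>x. emeasure (P x) {\<omega>\<in>space (P x). \<omega> t \<in> A}) \<in> borel_measurable borel \<and>
           (\<integral>\<^sup>+x. emeasure (P x) {\<omega>\<in>space (P x). \<omega> t \<in> A} \<partial>\<mu>) = emeasure \<mu> A)"
    using stat unfolding stationary_prob_def by blast
  then obtain P where sol: "\<forall>x. solves_MP L x (P x)"
    and kern: "\<forall>t\<ge>0. \<forall>A\<in>sets borel.
           (\<lambda>x. emeasure (P x) {\<omega>\<in>space (P x). \<omega> t \<in> A}) \<in> borel_measurable borel \<and>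
           (\<integral>\<^sup>+x. emeasure (P x) {\<omega>\<in>space (P x). \<omega> t \<in> A} \<partial>\<mu>) = emeasure \<mu> A"
    by blast
  interpret mu: prob_space \<mu> by (rule ps)
  obtain B where B: "\<And>y. \<bar>f y\<bar> \<le> B" using test_fun_bounded[OF tf] by blast
  have fm: "f \<in> borel_measurable borel"
    by (rule borel_measurable_continuous_onI[OF cont_f_of_test[OF tf]])
  have Lm: "L f \<in> borel_measurable borel" by (rule borel_measurable_continuous_onI[OF Lc])
  define tn where "tn n = 1 / real (Suc n)" for n
  have tn0: "0 \<le> tn n" "0 < tn n" for n by (auto simp: tn_def)
  have kn: "\<And>A. A \<in> sets borel \<Longrightarrow>
           (\<lambda>x. emeasure (P x) {\<omega>\<in>space (P x). \<omega> (tn n) \<in> A}) \<in> borel_measurable borel \<and>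
           (\<integral>\<^sup>+x. emeasure (P x) {\<omega>\<in>space (P x). \<omega> (tn n) \<in> A} \<partial>\<mu>) = emeasure \<mu> A" for n
    using kern tn0(1)[of n] by simp
  note kl = kernel_lemma[OF ps sm spec[OF sol] kn tn0(1) fm B]
  note kl1 = kl(1) and kl2 = kl(2) and kl3 = kl(3)
  define W where "W n x = ((\<integral>\<omega>. f (\<omega> (tn n)) \<partial>P x) - f x) / tn n" for n x
  have fmu: "f \<in> borel_measurable \<mu>" using fm measurable_cong_sets[OF sm refl] by blast
  have fint: "integrable \<mu> f"
    by (rule mu.integrable_const_bound[where B=B]) (use B fmu in auto)
  have Wm: "W n \<in> borel_measurable \<mu>" for n
    unfolding W_def by (intro borel_measurable_divide borel_measurable_diff kl1 fmu borel_measurable_const)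
  have lim: "(\<lambda>n. \<integral>x. W n x \<partial>\<mu>) \<longlonglongrightarrow> (\<integral>x. L f x \<partial>\<mu>)"
  proof (rule integral_dominated_convergence[where w="\<lambda>_. M"])
    show "L f \<in> borel_measurable \<mu>" using Lm measurable_cong_sets[OF sm refl] by blast
    show "W n \<in> borel_measurable \<mu>" for n by (rule Wm)
    show "integrable \<mu> (\<lambda>_. M)" by simp
    show "AE x in \<mu>. (\<lambda>n. W n x) \<longlonglongrightarrow> L f x"
      using gen_lim[OF spec[OF sol] tf Lc M] unfolding W_def tn_def by simp
    show "AE x in \<mu>. norm (W n x) \<le> M" for n
      using gen_bound[OF spec[OF sol] tf Lc M tn0(2)] unfolding W_def by simp
  qed
  have "(\<integral>x. W n x \<partial>\<mu>) = 0" for n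
  proof -
    have "(\<integral>x. W n x \<partial>\<mu>) = (\<integral>x. ((\<integral>\<omega>. f (\<omega> (tn n)) \<partial>P x) - f x) \<partial>\<mu>) / tn n"
      unfolding W_def by (rule integral_divide_zero)
    also have "\<dots> = ((\<integral>x. (\<integral>\<omega>. f (\<omega> (tn n)) \<partial>P x) \<partial>\<mu>) - (\<integral>x. f x \<partial>\<mu>)) / tn n"
      using kl2[of n] fint by (subst Bochner_Integration.integral_diff) auto
    finally show ?thesis using kl3[of n] by simp
  qed
  then have "(\<lambda>n. \<integral>x. W n x \<partial>\<mu>) = (\<lambda>n. 0)" by simp
  with lim have "(\<lambda>n. 0::real) \<longlonglongrightarrow> (\<integral>x. L f x \<partial>\<mu>)" by simp
  then show ?thesis using LIMSEQ_unique[OF _ tendsto_const] by metis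
qed

lemma term_bound:
  fixes p1 p2 p11 p12 p21 p22 x lam e a W :: real
  assumes l: "lam \<ge> 1" and e: "0 \<le> e" "e \<le> 1" and a: "a > 0"
    and b: "\<bar>p1\<bar> \<le> W" "\<bar>p2\<bar> \<le> W" "\<bar>p11\<bar> \<le> W" "\<bar>p12\<bar> \<le> W" "\<bar>p21\<bar> \<le> W" "\<bar>p22\<bar> \<le> W"
  shows "\<bar>lam * (a/2 * e * (2*(p1 + p2/lam) + 2*x*(2*x*(p11 + p12/lam) + 2*x*(p21 + p22/lam)/lam)) - x*(2*x*(p1 + p2/lam)))\<bar>
     \<le> lam * (2*a + (8*a+4)*x^2) * W"
proof -
  have dl: "\<bar>q/lam\<bar> \<le> \<bar>q\<bar>" for q using l by (simp add: abs_div divide_le_eq mult_le_cancel_left1)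
  define A where "A = p1 + p2/lam"
  define B where "B = p11 + p12/lam"
  define C where "C = (p21 + p22/lam)/lam"
  have W0: "0 \<le> W" using b(1) by linarith
  have A: "\<bar>A\<bar> \<le> 2*W" unfolding A_def using dl[of p2] b by linarith
  have B: "\<bar>B\<bar> \<le> 2*W" unfolding B_def using dl[of p12] b by linarith
  have C: "\<bar>C\<bar> \<le> 2*W" unfolding C_def using dl[of "p21 + p22/lam"] dl[of p22] b by linarith
  have x2: "0 \<le> x^2" by simp
  have I: "\<bar>2*A + 2*x*(2*x*B + 2*x*C)\<bar> \<le> 4*W + 16*x^2*W"
  proof -
    have "2*A + 2*x*(2*x*B + 2*x*C) = 2*A + 4*x^2*(B + C)" by (simp add: power2_eq_square algebra_simps)
    moreover have "\<bar>4*x^2*(B + C)\<bar> \<le> 4*x^2*(4*W)"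
    proof -
      have BC: "\<bar>B+C\<bar> \<le> 4*W" using B C abs_triangle_ineq[of B C] by linarith
      have "\<bar>4*x^2*(B + C)\<bar> = 4*x^2*\<bar>B+C\<bar>" by (simp add: abs_mult)
      also have "\<dots> \<le> 4*x^2*(4*W)" by (rule mult_left_mono[OF BC]) simp
      finally show ?thesis .
    qed
    ultimately show ?thesis using A abs_triangle_ineq[of "2*A" "4*x^2*(B + C)"] by (simp only:)
  qed
  have I2: "\<bar>a/2 * e * (2*A + 2*x*(2*x*B + 2*x*C))\<bar> \<le> a/2 * (4*W + 16*x^2*W)"
  proof -
    have "\<bar>a/2 * e * (2*A + 2*x*(2*x*B + 2*x*C))\<bar> = a/2 * e * \<bar>2*A + 2*x*(2*x*B + 2*x*C)\<bar>"
      using a e by (simp add: abs_mult)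
    also have "\<dots> \<le> a/2 * 1 * (4*W + 16*x^2*W)"
      using I a e W0 by (intro mult_mono) auto
    finally show ?thesis by simp
  qed
  have I3: "\<bar>x*(2*x*A)\<bar> \<le> 4*x^2*W"
  proof -
    have "\<bar>x*(2*x*A)\<bar> = 2*x^2*\<bar>A\<bar>" by (simp add: abs_mult power2_eq_square)
    then show ?thesis using A x2 mult_left_mono[OF A, of "2*x^2"] by simp
  qed
  have "\<bar>a/2 * e * (2*A + 2*x*(2*x*B + 2*x*C)) - x*(2*x*A)\<bar> \<le> (2*a + (8*a+4)*x^2) * W"
    using I2 I3 abs_triangle_ineq4[of "a/2 * e * (2*A + 2*x*(2*x*B + 2*x*C))" "x*(2*x*A)"]
    by (simp add: algebra_simps)
  then have "lam * \<bar>a/2 * e * (2*A + 2*x*(2*x*B + 2*x*C)) - x*(2*x*A)\<bar> \<le> lam * ((2*a + (8*a+4)*x^2) * W)"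
    using l by (intro mult_left_mono) auto
  then show ?thesis using l by (simp add: A_def B_def C_def abs_mult)
qed

lemma comp_sq_le: "(x $ l)^2 \<le> (norm (x::real^'N::finite))^2"
  using component_le_norm_cart[of x l] by (metis abs_ge_zero power2_abs power_mono)

lemma ELt_bound:
  fixes lam :: "'N::finite \<Rightarrow> real"
  assumes l: "\<And>l. lam l \<ge> 1" and e: "\<And>l. 0 \<le> 1 + del l \<and> 1 + del l \<le> 1" and a: "a > 0"
    and b: "\<bar>pd 1 \<Psi> (qv lam x)\<bar> \<le> W" "\<bar>pd 2 \<Psi> (qv lam x)\<bar> \<le> W"
      "\<bar>pd 1 (pd 1 \<Psi>) (qv lam x)\<bar> \<le> W" "\<bar>pd 2 (pd 1 \<Psi>) (qv lam x)\<bar> \<le> W"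
      "\<bar>pd 1 (pd 2 \<Psi>) (qv lam x)\<bar> \<le> W" "\<bar>pd 2 (pd 2 \<Psi>) (qv lam x)\<bar> \<le> W"
  shows "\<bar>ELt lam a del \<Psi> x\<bar> \<le> (\<Sum>l\<in>UNIV. lam l) * (2*a + (8*a+4)*(norm x)^2) * W"
proof -
  have W0: "0 \<le> W" using b(1) by linarith
  have "\<bar>ELt lam a del \<Psi> x\<bar> \<le> (\<Sum>l\<in>UNIV. lam l * (2*a + (8*a+4)*(x$l)^2) * W)"
    unfolding ELt_def
    by (rule order_trans[OF sum_abs sum_mono], rule term_bound) (use l e a b in auto)
  also have "\<dots> \<le> (\<Sum>l\<in>UNIV. lam l * (2*a + (8*a+4)*(norm x)^2) * W)"
  proof (rule sum_mono)
    fix l :: 'N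
    have "(8*a+4)*(x$l)^2 \<le> (8*a+4)*(norm x)^2" using comp_sq_le[of x l] a by (intro mult_left_mono) auto
    then show "lam l * (2*a + (8*a+4)*(x$l)^2) * W \<le> lam l * (2*a + (8*a+4)*(norm x)^2) * W"
      using l[of l] W0 by (intro mult_right_mono mult_left_mono) auto
  qed
  also have "\<dots> = (\<Sum>l\<in>UNIV. lam l) * (2*a + (8*a+4)*(norm x)^2) * W"
    by (simp add: sum_distrib_right)
  finally show ?thesis .
qed

definition Phi :: "(real^2 \<Rightarrow> real) \<Rightarrow> real \<Rightarrow> real^2 \<Rightarrow> real" where
  "Phi \<psi> R = (\<lambda>y. \<psi> y * hR 0 R y)"

definition ci :: "2 \<Rightarrow> real" where "ci i = (if i = 1 then -1 else 0)"

lemma smooth_const: "smooth (\<lambda>x::real^'N::finite. c)"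
  by (rule alg_smooth[where B="{}"]) (auto intro: alg.const)

lemma pd_const: "pd k (\<lambda>x::real^'N::finite. c) = (\<lambda>x. 0)"
  by (rule ext, rule pd_eqI) simp

lemma smooth_Phi: "smooth \<psi> \<Longrightarrow> smooth (Phi \<psi> R)"
  unfolding Phi_def by (intro smooth_mult smooth_hR)

lemma pd_Phi: "smooth \<psi> \<Longrightarrow> pd i (Phi \<psi> R) = (\<lambda>y. pd i \<psi> y * hR 0 R y + \<psi> y * (ci i * hR 1 R y))"
  unfolding Phi_def pd_mult_fun[OF _ smooth_hR] pd_hR ci_def by simp

lemma pd_pd_Phi:
  assumes s: "smooth \<psi>"
  shows "pd j (pd i (Phi \<psi> R)) = (\<lambda>y. (pd j (pd i \<psi>) y * hR 0 R y + pd i \<psi> y * (ci j * hR 1 R y))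
      + (pd j \<psi> y * (ci i * hR 1 R y) + \<psi> y * (ci i * (ci j * hR 2 R y))))"
proof -
  have si: "smooth (pd i \<psi>)" using smooth_pds[OF s, of "[i]"] by simp
  have sc: "smooth (\<lambda>y::real^2. ci i * hR 1 R y)" by (intro smooth_mult smooth_const smooth_hR)
  have pc: "pd j (\<lambda>y::real^2. ci i * hR 1 R y) = (\<lambda>y. ci i * (ci j * hR 2 R y))"
    unfolding pd_mult_fun[OF smooth_const smooth_hR] pd_const pd_hR ci_def by (simp add: numeral_2_eq_2)
  show ?thesis
    unfolding pd_Phi[OF s]
    unfolding pd_add_fun[OF smooth_mult[OF si smooth_hR] smooth_mult[OF s sc]]
    unfolding pd_mult_fun[OF si smooth_hR] pd_mult_fun[OF s sc]
    unfolding pc pd_hR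
    by (simp add: ci_def)
qed

lemma abs_lin2:
  fixes a b c u v M :: real
  assumes "\<bar>u\<bar> \<le> M" "\<bar>v\<bar> \<le> M" "\<bar>c\<bar> \<le> 1"
  shows "\<bar>a * u + b * (c * v)\<bar> \<le> M * (\<bar>a\<bar> + \<bar>b\<bar>)"
proof -
  have M0: "0 \<le> M" using assms(1) by linarith
  have 1: "\<bar>a * u\<bar> \<le> \<bar>a\<bar> * M" by (simp add: abs_mult assms(1) mult_left_mono)
  have "\<bar>c * v\<bar> \<le> 1 * M" unfolding abs_mult by (rule mult_mono) (use assms M0 in auto)
  then have 2: "\<bar>b * (c * v)\<bar> \<le> \<bar>b\<bar> * M" by (simp add: abs_mult mult_left_mono)
  show ?thesis using 1 2 abs_triangle_ineq[of "a * u" "b * (c * v)"] by (simp add: algebra_simps)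
qed

lemma ci_abs: "\<bar>ci i\<bar> \<le> 1" by (simp add: ci_def)

lemma hR_abs: "(\<And>j t. j \<le> 2 \<Longrightarrow> \<bar>hD j t\<bar> \<le> Mh) \<Longrightarrow> j \<le> 2 \<Longrightarrow> \<bar>hR j R y\<bar> \<le> Mh"
  by (simp add: hR_def)

lemma Phi_bound1:
  assumes s: "smooth \<psi>" and Mh: "\<And>j t. j \<le> 2 \<Longrightarrow> \<bar>hD j t\<bar> \<le> Mh"
  shows "\<bar>pd i (Phi \<psi> R) y\<bar> \<le> Mh * (\<bar>pd i \<psi> y\<bar> + \<bar>\<psi> y\<bar>)"
  unfolding pd_Phi[OF s] by (rule abs_lin2) (use hR_abs[OF Mh] ci_abs in auto)

lemma Phi_bound2:
  assumes s: "smooth \<psi>" and Mh: "\<And>j t. j \<le> 2 \<Longrightarrow> \<bar>hD j t\<bar> \<le> Mh"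
  shows "\<bar>pd j (pd i (Phi \<psi> R)) y\<bar> \<le> Mh * (\<bar>pd j (pd i \<psi>) y\<bar> + \<bar>pd i \<psi> y\<bar> + \<bar>pd j \<psi> y\<bar> + \<bar>\<psi> y\<bar>)"
proof -
  have 1: "\<bar>pd j (pd i \<psi>) y * hR 0 R y + pd i \<psi> y * (ci j * hR 1 R y)\<bar> \<le> Mh * (\<bar>pd j (pd i \<psi>) y\<bar> + \<bar>pd i \<psi> y\<bar>)"
    by (rule abs_lin2) (use hR_abs[OF Mh] ci_abs in auto)
  have c: "\<bar>ci i * hR 2 R y\<bar> \<le> Mh"
  proof -
    have "\<bar>ci i * hR 2 R y\<bar> \<le> 1 * Mh" unfolding abs_mult
      by (rule mult_mono) (use hR_abs[OF Mh, of 2] ci_abs hR_abs[OF Mh, of 0] in auto)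
    then show ?thesis by simp
  qed
  have 2: "\<bar>pd j \<psi> y * (ci i * hR 1 R y) + \<psi> y * (ci i * (ci j * hR 2 R y))\<bar> \<le> Mh * (\<bar>pd j \<psi> y\<bar> + \<bar>\<psi> y\<bar>)"
  proof -
    have eq: "\<psi> y * (ci i * (ci j * hR 2 R y)) = \<psi> y * (ci j * (ci i * hR 2 R y))" by (simp add: mult.left_commute)
    have X: "\<bar>pd j \<psi> y * (ci i * hR 1 R y) + \<psi> y * (ci j * (ci i * hR 2 R y))\<bar> \<le> Mh * (\<bar>pd j \<psi> y\<bar> + \<bar>\<psi> y\<bar>)"
    proof -
      have "\<bar>ci i * hR 1 R y\<bar> \<le> 1 * Mh" unfolding abs_mult
        by (rule mult_mono) (use hR_abs[OF Mh, of 1] ci_abs hR_abs[OF Mh, of 0] in auto)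
      then have "\<bar>pd j \<psi> y * ((ci i * hR 1 R y))\<bar> \<le> \<bar>pd j \<psi> y\<bar> * Mh"
        by (simp add: abs_mult mult_left_mono)
      moreover have "\<bar>\<psi> y * (ci j * (ci i * hR 2 R y))\<bar> \<le> \<bar>\<psi> y\<bar> * Mh"
      proof -
        have "\<bar>ci j * (ci i * hR 2 R y)\<bar> \<le> 1 * Mh" unfolding abs_mult[of "ci j"]
          by (rule mult_mono) (use c ci_abs in auto)
        then show ?thesis by (simp add: abs_mult mult_left_mono)
      qed
      ultimately show ?thesis
        using abs_triangle_ineq[of "pd j \<psi> y * (ci i * hR 1 R y)" "\<psi> y * (ci j * (ci i * hR 2 R y))"]
        by (simp add: algebra_simps)
    qed
    show ?thesis unfolding eq by (rule X)
  qed
  show ?thesis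
    unfolding pd_pd_Phi[OF s]
    using 1 2 abs_triangle_ineq[of "pd j (pd i \<psi>) y * hR 0 R y + pd i \<psi> y * (ci j * hR 1 R y)"
        "pd j \<psi> y * (ci i * hR 1 R y) + \<psi> y * (ci i * (ci j * hR 2 R y))"]
    by (simp add: algebra_simps)
qed

lemma hR_vanish: "R \<le> y$1 \<Longrightarrow> hR j R y = 0"
  by (simp add: hR_def hD_nonpos)

lemma Phi_vanish:
  assumes s: "smooth \<psi>" and y: "R \<le> y$1"
  shows "pd i (Phi \<psi> R) y = 0" "pd j (pd i (Phi \<psi> R)) y = 0"
  using hR_vanish[OF y] by (simp add: pd_Phi[OF s], simp add: pd_pd_Phi[OF s])

lemma hR_lim: "((\<lambda>n. hR j (real n) y) \<longlongrightarrow> poly (Pp j) 0) sequentially"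
proof -
  have f: "filterlim (\<lambda>n. - (y$1) + real n) at_top sequentially"
    by (rule filterlim_tendsto_add_at_top[OF tendsto_const filterlim_real_sequentially])
  show ?thesis
    using filterlim_compose[OF hD_lim_top f] by (simp add: hR_def)
qed

lemma Phi_lim:
  assumes s: "smooth \<psi>"
  shows "((\<lambda>n. pd i (Phi \<psi> (real n)) y) \<longlongrightarrow> pd i \<psi> y) sequentially"
    "((\<lambda>n. pd j (pd i (Phi \<psi> (real n))) y) \<longlongrightarrow> pd j (pd i \<psi>) y) sequentially"
proof -
  note l0 = hR_lim[of 0 y] and l1 = hR_lim[of 1 y] and l2 = hR_lim[of 2 y]
  have "((\<lambda>n. pd i \<psi> y * hR 0 (real n) y + \<psi> y * (ci i * hR 1 (real n) y)) \<longlongrightarrow>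
      pd i \<psi> y * poly (Pp 0) 0 + \<psi> y * (ci i * poly (Pp 1) 0)) sequentially"
    by (intro tendsto_intros l0 l1)
  then show "((\<lambda>n. pd i (Phi \<psi> (real n)) y) \<longlongrightarrow> pd i \<psi> y) sequentially"
    unfolding pd_Phi[OF s] by simp
  have "((\<lambda>n. (pd j (pd i \<psi>) y * hR 0 (real n) y + pd i \<psi> y * (ci j * hR 1 (real n) y))
      + (pd j \<psi> y * (ci i * hR 1 (real n) y) + \<psi> y * (ci i * (ci j * hR 2 (real n) y)))) \<longlongrightarrow>
      (pd j (pd i \<psi>) y * poly (Pp 0) 0 + pd i \<psi> y * (ci j * poly (Pp 1) 0))
      + (pd j \<psi> y * (ci i * poly (Pp 1) 0) + \<psi> y * (ci i * (ci j * poly (Pp 2) 0)))) sequentially"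
    by (intro tendsto_intros l0 l1 l2)
  then show "((\<lambda>n. pd j (pd i (Phi \<psi> (real n))) y) \<longlongrightarrow> pd j (pd i \<psi>) y) sequentially"
    unfolding pd_pd_Phi[OF s] by (simp add: numeral_2_eq_2)
qed

lemma poly_exp_bound:
  assumes e: "(\<epsilon>::real) > 0"
  shows "\<exists>C. \<forall>r\<ge>0. (1 + 2*r)^k \<le> C * exp (\<epsilon> * r)"
proof (cases "k = 0")
  case True
  then show ?thesis using e by (intro exI[of _ 1]) auto
next
  case False
  define c where "c = min 1 (\<epsilon> / real k)"
  have c0: "0 < c" "c \<le> 1" "real k * c \<le> \<epsilon>"
    using e False by (auto simp: c_def min_def field_simps)
  show ?thesis
  proof (intro exI allI impI)
    fix r :: real assume r: "0 \<le> r"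
    have "1 + 2*r \<le> (2/c) * exp (c * r)"
    proof -
      have "1 + 2*r \<le> (2/c) * (1 + c*r)" using c0 r by (simp add: field_simps)
      also have "\<dots> \<le> (2/c) * exp (c * r)" using c0 by (intro mult_left_mono) auto
      finally show ?thesis .
    qed
    then have "(1 + 2*r)^k \<le> ((2/c) * exp (c * r))^k" using r by (intro power_mono) auto
    also have "\<dots> = (2/c)^k * exp (real k * (c * r))" by (simp only: power_mult_distrib exp_of_nat_mult)
    also have "\<dots> \<le> (2/c)^k * exp (\<epsilon> * r)"
      using c0 r by (intro mult_left_mono) (auto intro!: mult_right_mono simp: mult.assoc[symmetric])
    finally show "(1 + 2*r)^k \<le> (2/c)^k * exp (\<epsilon> * r)" .
  qed
qed

lemma leps_radial:
  fixes lamc :: "('i::finite \<times> bool) \<Rightarrow> real" and b :: "real^('i \<times> bool) \<Rightarrow> real^('i \<times> bool)"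
  assumes pos: "\<And>l. lamc l > 0" and pair: "\<And>i. lamc (i,True) = lamc (i,False)"
    and orth: "\<And>x. inner x (b x) = 0" and orthw: "\<And>x. winner lamc x (b x) = 0"
    and s: "smooth \<Phi>"
  shows "Leps lamc a delc b \<kappa> \<epsilon> (\<lambda>x. \<Phi> (qv lamc x)) = Ltil lamc a delc (\<lambda>x. \<Phi> (qv lamc x))"
proof
  fix x :: "real^('i \<times> bool)"
  define G where "G = (\<lambda>x. \<Phi> (qv lamc x))"
  define P1 where "P1 x = pd 1 \<Phi> (qv lamc x)" for x
  define P2 where "P2 x = pd 2 \<Phi> (qv lamc x)" for x
  have pdG: "pd l G y = 2 * y$l * (P1 y + P2 y / lamc l)" for l y
    unfolding G_def P1_def P2_def by (rule pd_comp[OF s])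
  have lne: "lamc l \<noteq> 0" for l using pos[of l] by simp
  have B0: "Bop b G y = 0" for y
  proof -
    have "b y $ l * (2 * y$l * (P1 y + P2 y / lamc l)) = 2 * P1 y * (y$l * b y $ l) + 2 * P2 y * (y$l * b y $ l / lamc l)" for l
      by (simp add: algebra_simps)
    then have "Bop b G y = 2 * P1 y * (\<Sum>l\<in>UNIV. y$l * b y $ l) + 2 * P2 y * (\<Sum>l\<in>UNIV. y$l * b y $ l / lamc l)"
      unfolding Bop_def pdG by (simp add: sum.distrib sum_distrib_left)
    moreover have "(\<Sum>l\<in>UNIV. y$l * b y $ l) = 0" using orth[of y] by (simp add: inner_vec_def)
    moreover have "(\<Sum>l\<in>UNIV. y$l * b y $ l / lamc l) = 0" using orthw[of y] by (simp add: winner_def)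
    ultimately show ?thesis by simp
  qed
  have T0: "TJ lamc J G = (\<lambda>y. 0)" for J
  proof
    fix y
    obtain k l m where J: "J = (k,l,m)" by (cases J) auto
    show "TJ lamc J G y = 0"
    proof -
      have "TJ lamc J G y = 2 * y$k * y$l * y$m * (
          (1/lamc k - 1/lamc l) * (P1 y + P2 y / lamc m)
        + (1/lamc l - 1/lamc m) * (P1 y + P2 y / lamc k)
        + (1/lamc m - 1/lamc k) * (P1 y + P2 y / lamc l))"
        unfolding J TJ_def pdG by (simp add: algebra_simps)
      also have "(1/lamc k - 1/lamc l) * (P1 y + P2 y / lamc m)
        + (1/lamc l - 1/lamc m) * (P1 y + P2 y / lamc k)
        + (1/lamc m - 1/lamc k) * (P1 y + P2 y / lamc l) = 0"
        by (simp add: algebra_simps add_divide_distrib diff_divide_distrib)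
      finally show ?thesis by simp
    qed
  qed
  have R0: "Rop i G = (\<lambda>y. 0)" for i
  proof
    fix y
    show "Rop i G y = 0" unfolding Rop_def pdG pair by (simp add: algebra_simps)
  qed
  have TT: "TJ lamc J (TJ lamc J G) y = 0" for J y
    unfolding T0 by (cases J) (simp add: TJ_def pd_const)
  have RR: "Rop i (Rop i G) y = 0" for i y
    unfolding R0 by (simp add: Rop_def pd_const)
  have D0: "Dop lamc G x = 0"
    unfolding Dop_def TT RR by simp
  show "Leps lamc a delc b \<kappa> \<epsilon> (\<lambda>x. \<Phi> (qv lamc x)) x = Ltil lamc a delc (\<lambda>x. \<Phi> (qv lamc x)) x"
    using B0[of x] D0 unfolding Leps_def G_def by simp
qed

lemma Ltil_cont:
  assumes s: "smooth f"
  shows "continuous_on UNIV (Ltil lam a del f)"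
proof -
  have c1: "continuous_on UNIV (pd l f)" for l using smooth_D(1)[OF smooth_pds[OF s, of "[l]"]] by simp
  have c2: "continuous_on UNIV (pd l (pd l f))" for l using smooth_D(1)[OF smooth_pds[OF s, of "[l,l]"]] by simp
  show ?thesis unfolding Ltil_def[abs_def]
    by (intro continuous_intros c1 c2)
qed

lemma uniform_growth:
  fixes F :: "'k \<Rightarrow> 'a::real_normed_vector \<Rightarrow> real"
  assumes "finite K" and g: "\<And>ks. \<exists>C (m::nat). \<forall>y. \<bar>F ks y\<bar> \<le> C * (1 + norm y) ^ m"
  shows "\<exists>C (m::nat). C \<ge> 0 \<and> (\<forall>ks\<in>K. \<forall>y. \<bar>F ks y\<bar> \<le> C * (1 + norm y) ^ m)"
  using assms(1)
proof induction
  case empty then show ?case by (intro exI[of _ 0]) auto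
next
  case (insert k K)
  then obtain C m where C: "C \<ge> 0" "\<forall>ks\<in>K. \<forall>y. \<bar>F ks y\<bar> \<le> C * (1 + norm y) ^ m" by blast
  obtain C2 m2 where C2: "\<forall>y. \<bar>F k y\<bar> \<le> C2 * (1 + norm y) ^ m2" using g by blast
  let ?C = "max C (max C2 0)" and ?m = "max m m2"
  have mono: "D * (1 + norm y) ^ n \<le> ?C * (1 + norm y) ^ ?m" if "D \<le> ?C" "n \<le> ?m" for D n y
  proof -
    have "(1 + norm y) ^ n \<le> (1 + norm y) ^ ?m" by (rule power_increasing) (use that in auto)
    then show ?thesis using that by (intro mult_mono) auto
  qed
  have "\<forall>ks\<in>insert k K. \<forall>y. \<bar>F ks y\<bar> \<le> ?C * (1 + norm y) ^ ?m"
  proof (intro ballI allI)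
    fix ks y assume "ks \<in> insert k K"
    then show "\<bar>F ks y\<bar> \<le> ?C * (1 + norm y) ^ ?m"
    proof
      assume "ks = k"
      have "\<bar>F k y\<bar> \<le> C2 * (1 + norm y) ^ m2" using C2 by blast
      also have "\<dots> \<le> ?C * (1 + norm y) ^ ?m" by (rule mono) auto
      finally show ?thesis using \<open>ks = k\<close> by simp
    next
      assume "ks \<in> K"
      then have "\<bar>F ks y\<bar> \<le> C * (1 + norm y) ^ m" using C(2) by blast
      also have "\<dots> \<le> ?C * (1 + norm y) ^ ?m" by (rule mono) auto
      finally show ?thesis .
    qed
  qed
  then show ?case by (intro exI[of _ ?C] exI[of _ ?m]) auto
qed

lemma wnorm2_le:
  assumes "\<And>l. lamc l \<ge> 1"
  shows "wnorm2 lamc x \<le> (norm x)^2" "0 \<le> wnorm2 lamc x"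
proof -
  have "(x$l)^2 / lamc l \<le> (x$l)^2" for l
    using assms[of l] by (simp add: divide_le_eq mult_le_cancel_left1)
  then show "wnorm2 lamc x \<le> (norm x)^2"
    unfolding wnorm2_def norm_sq_sum by (rule sum_mono)
  show "0 \<le> wnorm2 lamc x" unfolding wnorm2_def using assms
    by (intro sum_nonneg divide_nonneg_nonneg) (auto intro: order_trans[of 0 1])
qed

lemma wnorm2_ge:
  assumes "\<And>l. lamc l \<ge> 1"
  shows "(norm x)^2 / (\<Sum>l\<in>UNIV. lamc l) \<le> wnorm2 lamc x"
proof -
  have "(x$l)^2 / (\<Sum>l\<in>UNIV. lamc l) \<le> (x$l)^2 / lamc l" for l
  proof (rule divide_left_mono)
    show "lamc l \<le> (\<Sum>l\<in>UNIV. lamc l)"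
      by (rule member_le_sum) (use assms in \<open>auto intro: order_trans[of 0 1]\<close>)
    have "1 \<le> lamc l" by (rule assms)
    then show "0 < (\<Sum>l\<in>UNIV. lamc l) * lamc l"
      using \<open>lamc l \<le> _\<close> by (intro mult_pos_pos) linarith+
  qed simp
  then have "(\<Sum>l\<in>UNIV. (x$l)^2 / (\<Sum>l\<in>UNIV. lamc l)) \<le> wnorm2 lamc x"
    unfolding wnorm2_def by (rule sum_mono)
  then show ?thesis by (simp add: norm_sq_sum sum_divide_distrib)
qed

lemma norm_qv_le:
  assumes "\<And>l. lamc l \<ge> 1"
  shows "norm (qv lamc x) \<le> 2 * (norm x)^2"
proof -
  have "norm (qv lamc x) \<le> \<bar>qv lamc x $ 1\<bar> + \<bar>qv lamc x $ 2\<bar>"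
    using norm_le_l1_cart[of "qv lamc x"] by (simp add: sum_2)
  also have "\<dots> = (norm x)^2 + wnorm2 lamc x"
  proof -
    have "0 \<le> wnorm2 lamc x" by (rule wnorm2_le(2)) (rule assms)
    then show ?thesis by (simp add: qv_def)
  qed
  also have "\<dots> \<le> 2 * (norm x)^2"
  proof -
    have "wnorm2 lamc x \<le> (norm x)^2" by (rule wnorm2_le(1)) (rule assms)
    then show ?thesis by simp
  qed
  finally show ?thesis .
qed

lemma qv_1: "qv lamc x $ 1 = (norm x)^2" by (simp add: qv_def)

lemma wnorm2_cont: "continuous_on UNIV (wnorm2 lamc)"
  unfolding wnorm2_def[abs_def] divide_inverse by (intro continuous_intros)

theorem proposition1p5:
  fixes n :: nat
    and lam :: "'i::{finite,linorder} \<Rightarrow> real"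
    and a \<kappa> \<epsilon> :: real
    and del :: "'i \<Rightarrow> real"
    and b :: "real^('i \<times> bool) \<Rightarrow> real^('i \<times> bool)"
    and \<mu> :: "(real^('i \<times> bool)) measure"
    and \<psi> :: "real^2 \<Rightarrow> real"
  defines "lamc \<equiv> (\<lambda>(i::'i, _::bool). lam i)"
      and "delc \<equiv> (\<lambda>(i::'i, _::bool). del i)"
  assumes n: "CARD('i) = n" "n \<ge> 4"
    and lam_mono: "strict_mono lam" and lam_one: "Min (range lam) = 1"
    and a_pos: "a > 0"
    and del_range: "\<forall>i. -1 < del i \<and> del i \<le> 0"
    and b_quad: "\<exists>Q. \<forall>x l. b x $ l = (\<Sum>j\<in>UNIV. \<Sum>k\<in>UNIV. Q l j k * x $ j * x $ k)"
    and b_div: "\<forall>x. divergence b x = 0"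
    and b_orth: "\<forall>x. inner x (b x) = 0"
    and b_orth_w: "\<forall>x. winner lamc x (b x) = 0"
    and \<kappa>: "0 < \<kappa>" "\<kappa> \<le> 1"
    and \<epsilon>: "\<epsilon> > 0"
    and wp: "well_posed_MP (Leps lamc a delc b \<kappa> \<epsilon>)"
    and stat: "stationary_prob (Leps lamc a delc b \<kappa> \<epsilon>) \<mu>"
    and exp_mom: "(\<integral>\<^sup>+x. ennreal (exp (wnorm2 lamc x / (2 * a))) \<partial>\<mu>) < \<infinity>"
    and \<psi>: "poly_growth_smooth \<psi>"
  shows "integrable \<mu> (Ltil lamc a delc (\<lambda>x. \<psi> (vector [(norm x)^2, wnorm2 lamc x])))
       \<and> (\<integral>x. Ltil lamc a delc (\<lambda>x. \<psi> (vector [(norm x)^2, wnorm2 lamc x])) x \<partial>\<mu>) = 0"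
proof -
  have lam1: "lamc l \<ge> 1" for l
  proof -
    obtain i v where l: "l = (i,v)" by (cases l)
    have "Min (range lam) \<le> lam i" by (rule Min_le) auto
    then show ?thesis using lam_one by (simp add: lamc_def l)
  qed
  have pos: "lamc l > 0" for l using lam1[of l] by simp
  have lne: "lamc l \<noteq> 0" for l using pos[of l] by simp
  have pair: "lamc (i,True) = lamc (i,False)" for i by (simp add: lamc_def)
  have dl: "0 \<le> 1 + delc l \<and> 1 + delc l \<le> 1" for l
  proof -
    obtain i v where l: "l = (i,v)" by (cases l)
    show ?thesis using del_range[rule_format, of i] by (simp add: delc_def l)
  qed
  have s\<psi>: "smooth \<psi>" using \<psi> unfolding poly_growth_smooth_def by blast
  have gr: "\<And>ks. \<exists>C (m::nat). \<forall>y. \<bar>pds ks \<psi> y\<bar> \<le> C * (1 + norm y) ^ m"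
    using \<psi> unfolding poly_growth_smooth_def by blast
  have fin: "finite {xs. set xs \<subseteq> (UNIV::2 set) \<and> length xs \<le> 2}" by (rule finite_lists_length_le) simp
  have "\<exists>C (m::nat). C \<ge> 0 \<and> (\<forall>ks\<in>{xs. set xs \<subseteq> (UNIV::2 set) \<and> length xs \<le> 2}. \<forall>y. \<bar>pds ks \<psi> y\<bar> \<le> C * (1 + norm y) ^ m)"
    by (rule uniform_growth[OF fin]) (rule gr)
  then obtain C m where C0: "C \<ge> 0"
    and Cb: "\<forall>ks\<in>{xs. set xs \<subseteq> (UNIV::2 set) \<and> length xs \<le> 2}. \<forall>y. \<bar>pds ks \<psi> y\<bar> \<le> C * (1 + norm y) ^ m"
    by blast
  have b0: "\<bar>\<psi> y\<bar> \<le> C * (1 + norm y) ^ m" for y using Cb[rule_format, of "[]" y] by simp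
  have b1: "\<bar>pd i \<psi> y\<bar> \<le> C * (1 + norm y) ^ m" for i y using Cb[rule_format, of "[i]" y] by simp
  have b2: "\<bar>pd j (pd i \<psi>) y\<bar> \<le> C * (1 + norm y) ^ m" for i j y using Cb[rule_format, of "[j,i]" y] by simp
  obtain M0 M1 M2 where M0: "\<And>t. \<bar>hD 0 t\<bar> \<le> M0" and M1: "\<And>t. \<bar>hD 1 t\<bar> \<le> M1" and M2: "\<And>t. \<bar>hD 2 t\<bar> \<le> M2"
    using hD_bounded by metis
  define Mh where "Mh = max M0 (max M1 M2)"
  have Mh: "\<bar>hD j t\<bar> \<le> Mh" if "j \<le> 2" for j t
  proof -
    have "j = 0 \<or> j = 1 \<or> j = 2" using that by auto
    then show ?thesis using M0[of t] M1[of t] M2[of t] unfolding Mh_def by auto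
  qed
  have Mh0: "0 \<le> Mh" using Mh[of 0 0] by simp
  define W where "W (y::real^2) = Mh * (4 * C * (1 + norm y) ^ m)" for y
  have cp: "0 \<le> C * (1 + norm y) ^ m" for y :: "real^2" using C0 by simp
  have W1: "\<bar>pd i (Phi \<psi> R) y\<bar> \<le> W y" for i R y
  proof -
    have "\<bar>pd i (Phi \<psi> R) y\<bar> \<le> Mh * (\<bar>pd i \<psi> y\<bar> + \<bar>\<psi> y\<bar>)" by (rule Phi_bound1[OF s\<psi> Mh])
    also have "\<dots> \<le> W y" unfolding W_def using b0[of y] b1[where i=i and y=y] cp[of y] Mh0
      by (intro mult_left_mono) auto
    finally show ?thesis .
  qed
  have W2: "\<bar>pd j (pd i (Phi \<psi> R)) y\<bar> \<le> W y" for i j R y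
  proof -
    have "\<bar>pd j (pd i (Phi \<psi> R)) y\<bar> \<le> Mh * (\<bar>pd j (pd i \<psi>) y\<bar> + \<bar>pd i \<psi> y\<bar> + \<bar>pd j \<psi> y\<bar> + \<bar>\<psi> y\<bar>)"
      by (rule Phi_bound2[OF s\<psi> Mh])
    also have "\<dots> \<le> W y" unfolding W_def using b0[of y] b1[where i=i and y=y] b1[where i=j and y=y] b2[where i=i and j=j and y=y] Mh0
      by (intro mult_left_mono) auto
    finally show ?thesis .
  qed
  define \<Lambda> where "\<Lambda> = (\<Sum>l\<in>UNIV. lamc l)"
  have \<Lambda>0: "\<Lambda> > 0" unfolding \<Lambda>_def by (rule sum_pos) (auto intro: pos)
  define K where "K = \<Lambda> * (8*a+4) * (Mh * (4 * C))"
  have K0: "0 \<le> K" unfolding K_def using \<Lambda>0 a_pos Mh0 C0 by simp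
  have ELtB: "\<bar>ELt lamc a delc (Phi \<psi> R) x\<bar> \<le> K * (1 + 2 * (norm x)^2) ^ (Suc m)" for R x
  proof -
    have "\<bar>ELt lamc a delc (Phi \<psi> R) x\<bar> \<le> \<Lambda> * (2*a + (8*a+4)*(norm x)^2) * W (qv lamc x)"
      unfolding \<Lambda>_def by (rule ELt_bound) (use lam1 dl a_pos W1 W2 in auto)
    also have "\<dots> \<le> \<Lambda> * ((8*a+4) * (1 + 2 * (norm x)^2)) * (Mh * (4 * C * (1 + 2 * (norm x)^2) ^ m))"
    proof (intro mult_mono mult_left_mono)
      show "2*a + (8*a+4)*(norm x)^2 \<le> (8*a+4) * (1 + 2 * (norm x)^2)"
        using a_pos by (simp add: algebra_simps)
      show "W (qv lamc x) \<le> Mh * (4 * C * (1 + 2 * (norm x)^2) ^ m)"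
        unfolding W_def using norm_qv_le[of lamc x, OF lam1] Mh0 C0
        by (intro mult_left_mono power_mono) auto
    qed (use \<Lambda>0 a_pos Mh0 C0 in \<open>auto simp: W_def\<close>)
    also have "\<dots> = K * (1 + 2 * (norm x)^2) ^ (Suc m)" unfolding K_def by (simp add: algebra_simps)
    finally show ?thesis .
  qed
  define \<epsilon>' where "\<epsilon>' = 1 / (2 * a * \<Lambda>)"
  have e'0: "\<epsilon>' > 0" unfolding \<epsilon>'_def using a_pos \<Lambda>0 by simp
  obtain C2 where C2: "\<And>r. 0 \<le> r \<Longrightarrow> (1 + 2*r)^(Suc m) \<le> C2 * exp (\<epsilon>' * r)"
    using poly_exp_bound[OF e'0, of "Suc m"] by blast
  define Dom where "Dom x = K * C2 * exp (wnorm2 lamc x / (2 * a))" for x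
  have DomB: "\<bar>ELt lamc a delc (Phi \<psi> R) x\<bar> \<le> Dom x" for R x
  proof -
    have r: "\<epsilon>' * (norm x)^2 \<le> wnorm2 lamc x / (2 * a)"
    proof -
      have "(norm x)^2 / \<Lambda> \<le> wnorm2 lamc x" unfolding \<Lambda>_def by (rule wnorm2_ge) (rule lam1)
      then have "(norm x)^2 / \<Lambda> / (2 * a) \<le> wnorm2 lamc x / (2 * a)"
        by (rule divide_right_mono) (use a_pos in simp)
      moreover have "\<epsilon>' * (norm x)^2 = (norm x)^2 / \<Lambda> / (2 * a)" unfolding \<epsilon>'_def by simp
      ultimately show ?thesis by simp
    qed
    have "\<bar>ELt lamc a delc (Phi \<psi> R) x\<bar> \<le> K * (1 + 2 * (norm x)^2) ^ (Suc m)" by (rule ELtB)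
    also have "\<dots> \<le> K * (C2 * exp (\<epsilon>' * (norm x)^2))" using C2[of "(norm x)^2"] K0 by (intro mult_left_mono) auto
    also have "\<dots> \<le> K * (C2 * exp (wnorm2 lamc x / (2 * a)))"
    proof -
      have "0 \<le> C2" using C2[of 0] by (smt (verit) exp_gt_zero mult_nonneg_nonneg one_le_power zero_le_mult_iff)
      then show ?thesis using K0 r by (intro mult_left_mono) auto
    qed
    finally show ?thesis unfolding Dom_def by (simp add: mult.assoc)
  qed
  define G where "G k = (\<lambda>x. Phi \<psi> (real k) (qv lamc x))" for k :: nat
  define g where "g = (\<lambda>x. \<psi> (qv lamc x))"
  have sPhi: "smooth (Phi \<psi> R)" for R by (rule smooth_Phi[OF s\<psi>])
  have sG: "smooth (G k)" for k unfolding G_def by (rule smooth_comp[OF sPhi])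
  have sg: "smooth g" unfolding g_def by (rule smooth_comp[OF s\<psi>])
  have LG: "Ltil lamc a delc (G k) = ELt lamc a delc (Phi \<psi> (real k))" for k
    unfolding G_def by (rule ext, rule Ltil_comp[OF sPhi])
  have Lg: "Ltil lamc a delc g = ELt lamc a delc \<psi>"
    unfolding g_def by (rule ext, rule Ltil_comp[OF s\<psi>])
  have LepsG: "Leps lamc a delc b \<kappa> \<epsilon> (G k) = Ltil lamc a delc (G k)" for k
    unfolding G_def by (rule leps_radial[OF pos pair _ _ sPhi]) (use b_orth b_orth_w in auto)
  have tf: "test_fun (G k)" for k
    unfolding test_fun_def
  proof (intro conjI exI allI impI)
    show "smooth (G k)" by (rule sG)
    fix x :: "real^('i \<times> bool)" assume "sqrt (real k) < norm x"
    then have "(sqrt (real k))^2 < (norm x)^2" by (intro power_strict_mono) auto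
    then have "real k < (norm x)^2" by simp
    then have "real k \<le> qv lamc x $ 1" by (simp add: qv_1)
    then show "G k x = 0" unfolding G_def Phi_def using hR_vanish by simp
  qed
  have ELt0: "ELt lamc a delc (Phi \<psi> (real k)) x = 0" if "real k \<le> (norm x)^2" for k x
  proof -
    have y: "real k \<le> qv lamc x $ 1" using that by (simp add: qv_1)
    show ?thesis unfolding ELt_def using Phi_vanish[OF s\<psi> y] by simp
  qed
  have Gbd: "\<bar>Ltil lamc a delc (G k) x\<bar> \<le> K * (1 + 2 * real k) ^ (Suc m)" for k x
  proof (cases "real k \<le> (norm x)^2")
    case True then show ?thesis unfolding LG using ELt0 K0 by simp
  next
    case False
    have "\<bar>Ltil lamc a delc (G k) x\<bar> \<le> K * (1 + 2 * (norm x)^2) ^ (Suc m)" unfolding LG by (rule ELtB)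
    also have "\<dots> \<le> K * (1 + 2 * real k) ^ (Suc m)"
      using False K0 by (intro mult_left_mono power_mono) auto
    finally show ?thesis .
  qed
  have int0: "(\<integral>x. Ltil lamc a delc (G k) x \<partial>\<mu>) = 0" for k
  proof -
    have "(\<integral>x. Leps lamc a delc b \<kappa> \<epsilon> (G k) x \<partial>\<mu>) = 0"
      by (rule gen_zero[OF stat tf]) (use Ltil_cont[OF sG] Gbd in \<open>simp_all add: LepsG\<close>)
    then show ?thesis by (simp add: LepsG)
  qed
  have sm: "sets \<mu> = sets borel" using stat unfolding stationary_prob_def by auto
  have meas: "f \<in> borel_measurable \<mu>" if "continuous_on UNIV f" for f :: "real^('i \<times> bool) \<Rightarrow> real"
    using borel_measurable_continuous_onI[OF that] measurable_cong_sets[OF sm refl] by blast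
  have Domint: "integrable \<mu> Dom"
  proof -
    have em: "(\<lambda>x. exp (wnorm2 lamc x / (2 * a))) \<in> borel_measurable \<mu>"
      by (rule meas) (unfold wnorm2_def divide_inverse, intro continuous_intros)
    have "integrable \<mu> (\<lambda>x. exp (wnorm2 lamc x / (2 * a)))"
      by (rule integrableI_bounded[OF em]) (use exp_mom in simp)
    then show ?thesis unfolding Dom_def[abs_def] by (rule integrable_mult_right)
  qed
  have lim: "\<And>x. (\<lambda>k. Ltil lamc a delc (G k) x) \<longlonglongrightarrow> Ltil lamc a delc g x"
  proof -
    fix x
    show "(\<lambda>k. Ltil lamc a delc (G k) x) \<longlonglongrightarrow> Ltil lamc a delc g x"
      unfolding LG Lg ELt_def
      by (intro tendsto_intros Phi_lim[OF s\<psi>]) (simp_all add: lne)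
  qed
  have "integrable \<mu> (Ltil lamc a delc g)"
    and "(\<lambda>k. \<integral>x. Ltil lamc a delc (G k) x \<partial>\<mu>) \<longlonglongrightarrow> (\<integral>x. Ltil lamc a delc g x \<partial>\<mu>)"
  proof -
    have fm: "Ltil lamc a delc g \<in> borel_measurable \<mu>" by (rule meas[OF Ltil_cont[OF sg]])
    have sm': "\<And>k. Ltil lamc a delc (G k) \<in> borel_measurable \<mu>" by (rule meas[OF Ltil_cont[OF sG]])
    have l: "AE x in \<mu>. (\<lambda>k. Ltil lamc a delc (G k) x) \<longlonglongrightarrow> Ltil lamc a delc g x" using lim by simp
    have bd: "\<And>k. AE x in \<mu>. norm (Ltil lamc a delc (G k) x) \<le> Dom x" unfolding LG using DomB by simp
    show "integrable \<mu> (Ltil lamc a delc g)"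
      by (rule integrable_dominated_convergence[OF fm sm' Domint l bd])
    show "(\<lambda>k. \<integral>x. Ltil lamc a delc (G k) x \<partial>\<mu>) \<longlonglongrightarrow> (\<integral>x. Ltil lamc a delc g x \<partial>\<mu>)"
      by (rule integral_dominated_convergence[OF fm sm' Domint l bd])
  qed
  moreover have "(\<integral>x. Ltil lamc a delc g x \<partial>\<mu>) = 0"
  proof -
    have "(\<lambda>k. 0::real) \<longlonglongrightarrow> (\<integral>x. Ltil lamc a delc g x \<partial>\<mu>)"
      using calculation(2) int0 by simp
    then show ?thesis using LIMSEQ_unique[OF _ tendsto_const] by metis
  qed
  moreover have "(\<lambda>x. \<psi> (vector [(norm x)^2, wnorm2 lamc x])) = g" by (simp add: g_def qv_def)
  ultimately show ?thesis by simp
qed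

end
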